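(* The UCB-LP and the Compact LP defined in the context have the same optimal objective value. Furthermore, the optimal values of the dual variables associated with the resource constraints (the constraints indexed by $k\in\mathcal K$) in the UCB-LP and in the Compact LP are the same.
   Context: Let $\mathcal N=\{1,\dots,N\}$ and $\mathcal K=\{1,\dots,K\}$. Data: $\hat v_i>0$, $r_i\in[0,1]$, $a(i,k)\in[0,1]$ for $i\in\mathcal N,k\in\mathcal K$, $c(k)>0$, $\omega\in[0,1)$, and $\varepsilon_i=\varepsilon(n_i)=(\sqrt N+1)\Psi/\sqrt{n_i}$ with positive integers $n_i$ and a constant $\Psi>0$. UCB-LP (variables $y(S)$, $S\subseteq\mathcal N$): maximize $\sum_{S\subseteq\mathcal N}\sum_{i\in S}r_i\Big(\frac{\hat v_i}{1+\sum_{j\in S}\hat v_j}+\varepsilon_i\Big)y(S)$ subject to $\sum_{S}\sum_{i\in S}a(i,k)\Big(\frac{\hat v_i}{1+\sum_{j\in S}\hat v_j}-\varepsilon_i\Big)y(S)\le(1-\omega)c(k)$ for all $k$, $\sum_S y(S)=1$, $y(S)\ge0$. Compact LP (variables $x_0\in\mathbb R$, $x\in\mathbb R_+^N$, $y\in\mathbb R_+^{N\times N}$): maximize $\sum_{i\in\mathcal N}r_i\big[(\hat v_i+\varepsilon_i)x_i+\varepsilon_i\sum_{j\in\mathcal N}\hat v_jy_{ij}\big]$ subject to $\sum_{i}a(i,k)\big[(\hat v_i-\varepsilon_i)x_i-\varepsilon_i\sum_j\hat v_jy_{ij}\big]\le(1-\omega)c(k)$ for all $k$; $x_0+\sum_i\hat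 v_ix_i=1$; $x_i\le x_0$ for all $i$; $y_{ij}\le\min\{x_i,x_j\}$ for all $i,j$. *)

theory Defs
  imports Complex_Main "HOL-Library.FuncSet"
begin

text \<open>A linear program: maximize  sum_{v in V} obj v * x v  subject to
  sum_{v in V} mat c v * x v  (=, if c in eqs; <= otherwise)  rhs c  for every c in cons,
  x v >= 0 for every v in V that is not free (free variables are unrestricted in sign).\<close>

record ('v, 'c) lp =
  lp_vars :: "'v set"
  lp_cons :: "'c set"
  lp_eqs  :: "'c set"
  lp_free :: "'v set"
  lp_obj  :: "'v \<Rightarrow> real"
  lp_mat  :: "'c \<Rightarrow> 'v \<Rightarrow> real"
  lp_rhs  :: "'c \<Rightarrow> real"

definition lp_feasible :: "('v, 'c) lp \<Rightarrow> ('v \<Rightarrow> real) \<Rightarrow> bool" where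
  "lp_feasible P x \<longleftrightarrow>
     (\<forall>v\<in>lp_vars P - lp_free P. 0 \<le> x v) \<and>
     (\<forall>c\<in>lp_cons P.
        (if c \<in> lp_eqs P then (\<Sum>v\<in>lp_vars P. lp_mat P c v * x v) = lp_rhs P c
         else (\<Sum>v\<in>lp_vars P. lp_mat P c v * x v) \<le> lp_rhs P c))"

definition lp_objective :: "('v, 'c) lp \<Rightarrow> ('v \<Rightarrow> real) \<Rightarrow> real" where
  "lp_objective P x = (\<Sum>v\<in>lp_vars P. lp_obj P v * x v)"

definition lp_value :: "('v, 'c) lp \<Rightarrow> real" where
  "lp_value P = Sup {lp_objective P x | x. lp_feasible P x}"

definition lp_dual_feasible :: "('v, 'c) lp \<Rightarrow> ('c \<Rightarrow> real) \<Rightarrow> bool" where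
  "lp_dual_feasible P u \<longleftrightarrow>
     (\<forall>c\<in>lp_cons P - lp_eqs P. 0 \<le> u c) \<and>
     (\<forall>v\<in>lp_vars P.
        (if v \<in> lp_free P then (\<Sum>c\<in>lp_cons P. lp_mat P c v * u c) = lp_obj P v
         else lp_obj P v \<le> (\<Sum>c\<in>lp_cons P. lp_mat P c v * u c)))"

definition lp_dual_objective :: "('v, 'c) lp \<Rightarrow> ('c \<Rightarrow> real) \<Rightarrow> real" where
  "lp_dual_objective P u = (\<Sum>c\<in>lp_cons P. lp_rhs P c * u c)"

definition lp_dual_optimal :: "('v, 'c) lp \<Rightarrow> ('c \<Rightarrow> real) \<Rightarrow> bool" where
  "lp_dual_optimal P u \<longleftrightarrow> lp_dual_feasible P u \<and>
     (\<forall>u'. lp_dual_feasible P u' \<longrightarrow> lp_dual_objective P u \<le> lp_dual_objective P u')"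

text \<open>Variables: subsets S of {1..N}. Constraints: Some k (resource k, k in {1..K}, <=)
  and None (the normalization sum_S y(S) = 1).\<close>

definition mnl_prob :: "(nat \<Rightarrow> real) \<Rightarrow> nat set \<Rightarrow> nat \<Rightarrow> real" where
  "mnl_prob vhat S i = vhat i / (1 + (\<Sum>j\<in>S. vhat j))"

definition ucb_lp ::
  "nat \<Rightarrow> nat \<Rightarrow> (nat \<Rightarrow> real) \<Rightarrow> (nat \<Rightarrow> real) \<Rightarrow> (nat \<Rightarrow> nat \<Rightarrow> real) \<Rightarrow> (nat \<Rightarrow> real)
   \<Rightarrow> real \<Rightarrow> (nat \<Rightarrow> real) \<Rightarrow> (nat set, nat option) lp" where
  "ucb_lp N K vhat r a c \<omega> eps =
     \<lparr> lp_vars = Pow {1..N},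
       lp_cons = insert None (Some ` {1..K}),
       lp_eqs = {None},
       lp_free = {},
       lp_obj = (\<lambda>S. \<Sum>i\<in>S. r i * (mnl_prob vhat S i + eps i)),
       lp_mat = (\<lambda>con S. case con of
                   None \<Rightarrow> 1
                 | Some k \<Rightarrow> (\<Sum>i\<in>S. a i k * (mnl_prob vhat S i - eps i))),
       lp_rhs = (\<lambda>con. case con of None \<Rightarrow> 1 | Some k \<Rightarrow> (1 - \<omega>) * c k) \<rparr>"

datatype cvar = X0 | X nat | Y nat nat

text \<open>Constraints: Res k (resource k), Norm (x_0 + sum_i vhat_i x_i = 1),
  Cap i (x_i <= x_0), YI i j (y_ij <= x_i), YJ i j (y_ij <= x_j); the last two together
  express y_ij <= min{x_i, x_j}.\<close>
datatype ccon = Res nat | Norm | Cap nat | YI nat nat | YJ nat nat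

fun compact_obj :: "(nat \<Rightarrow> real) \<Rightarrow> (nat \<Rightarrow> real) \<Rightarrow> (nat \<Rightarrow> real) \<Rightarrow> cvar \<Rightarrow> real" where
  "compact_obj vhat r eps X0 = 0"
| "compact_obj vhat r eps (X i) = r i * (vhat i + eps i)"
| "compact_obj vhat r eps (Y i j) = r i * eps i * vhat j"

fun compact_mat ::
  "(nat \<Rightarrow> real) \<Rightarrow> (nat \<Rightarrow> nat \<Rightarrow> real) \<Rightarrow> (nat \<Rightarrow> real) \<Rightarrow> ccon \<Rightarrow> cvar \<Rightarrow> real" where
  "compact_mat vhat a eps (Res k) X0 = 0"
| "compact_mat vhat a eps (Res k) (X i) = a i k * (vhat i - eps i)"
| "compact_mat vhat a eps (Res k) (Y i j) = - (a i k * eps i * vhat j)"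
| "compact_mat vhat a eps Norm X0 = 1"
| "compact_mat vhat a eps Norm (X i) = vhat i"
| "compact_mat vhat a eps Norm (Y i j) = 0"
| "compact_mat vhat a eps (Cap i) X0 = -1"
| "compact_mat vhat a eps (Cap i) (X i') = (if i' = i then 1 else 0)"
| "compact_mat vhat a eps (Cap i) (Y i' j') = 0"
| "compact_mat vhat a eps (YI i j) X0 = 0"
| "compact_mat vhat a eps (YI i j) (X i') = (if i' = i then -1 else 0)"
| "compact_mat vhat a eps (YI i j) (Y i' j') = (if i' = i \<and> j' = j then 1 else 0)"
| "compact_mat vhat a eps (YJ i j) X0 = 0"
| "compact_mat vhat a eps (YJ i j) (X i') = (if i' = j then -1 else 0)"
| "compact_mat vhat a eps (YJ i j) (Y i' j') = (if i' = i \<and> j' = j then 1 else 0)"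

fun compact_rhs :: "nat \<Rightarrow> (nat \<Rightarrow> real) \<Rightarrow> real \<Rightarrow> ccon \<Rightarrow> real" where
  "compact_rhs K c \<omega> (Res k) = (1 - \<omega>) * c k"
| "compact_rhs K c \<omega> Norm = 1"
| "compact_rhs K c \<omega> (Cap i) = 0"
| "compact_rhs K c \<omega> (YI i j) = 0"
| "compact_rhs K c \<omega> (YJ i j) = 0"

definition compact_lp ::
  "nat \<Rightarrow> nat \<Rightarrow> (nat \<Rightarrow> real) \<Rightarrow> (nat \<Rightarrow> real) \<Rightarrow> (nat \<Rightarrow> nat \<Rightarrow> real) \<Rightarrow> (nat \<Rightarrow> real)
   \<Rightarrow> real \<Rightarrow> (nat \<Rightarrow> real) \<Rightarrow> (cvar, ccon) lp" where
  "compact_lp N K vhat r a c \<omega> eps =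
     \<lparr> lp_vars = {X0} \<union> X ` {1..N} \<union> {Y i j | i j. i \<in> {1..N} \<and> j \<in> {1..N}},
       lp_cons = Res ` {1..K} \<union> {Norm} \<union> Cap ` {1..N}
                 \<union> {YI i j | i j. i \<in> {1..N} \<and> j \<in> {1..N}}
                 \<union> {YJ i j | i j. i \<in> {1..N} \<and> j \<in> {1..N}},
       lp_eqs = {Norm},
       lp_free = {X0},
       lp_obj = compact_obj vhat r eps,
       lp_mat = compact_mat vhat a eps,
       lp_rhs = compact_rhs K c \<omega> \<rparr>"

end

theory Submission
  imports Defs "HOL-Library.Nat_Bijection"
begin

lemma fm_farkas:
  fixes a :: "nat \<Rightarrow> 'v \<Rightarrow> real" and b :: "nat \<Rightarrow> real"
  assumes "finite V"
  shows "finite I \<Longrightarrow> \<not> (\<exists>x. \<forall>i\<in>I. (\<Sum>u\<in>V. a i u * x u) \<le> b i) \<Longrightarrow>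
     \<exists>l. (\<forall>i\<in>I. 0 \<le> l i) \<and> (\<forall>u\<in>V. (\<Sum>i\<in>I. l i * a i u) = 0) \<and> (\<Sum>i\<in>I. l i * b i) < 0"
  using assms
proof (induction V arbitrary: I a b rule: finite_induct)
  case empty
  then obtain i where i: "i \<in> I" "b i < 0" by (force simp: not_le)
  have "(\<Sum>j\<in>I. (if j = i then 1 else 0) * b j) = (\<Sum>j\<in>I. if j = i then b j else 0)"
    by (rule sum.cong) auto
  also have "\<dots> = b i" using i empty by simp
  finally show ?case using i
    by (intro exI[of _ "\<lambda>j. if j = i then 1 else 0"]) auto
next
  case (insert v V)
  define I0 where "I0 = {i\<in>I. a i v = 0}"
  define Ip where "Ip = {i\<in>I. a i v > 0}"
  define In where "In = {i\<in>I. a i v < 0}"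
  define enc where "enc = (\<lambda>p n. 2 * prod_encode (p, n) + (1::nat))"
  define cb :: "(nat \<Rightarrow> real) \<Rightarrow> nat \<Rightarrow> real" where
    "cb = (\<lambda>F j. if even j then F (j div 2) else
            (case prod_decode (j div 2) of (p, n) \<Rightarrow> (- a n v) * F p + a p v * F n))"
  define I' where "I' = (\<lambda>i. 2*i) ` I0 \<union> (\<lambda>(p,n). enc p n) ` (Ip \<times> In)"
  define a' where "a' = (\<lambda>j u. cb (\<lambda>i. a i u) j)"
  define b' where "b' = cb b"
  have cb_even: "cb F (2*i) = F i" for F i by (simp add: cb_def)
  have cb_odd: "cb F (enc p n) = (- a n v) * F p + a p v * F n" for F p n
    by (simp add: cb_def enc_def)
  have fin: "finite I0" "finite Ip" "finite In" using insert.prems(1) by (auto simp: I0_def Ip_def In_def)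
  have finI': "finite I'" using fin by (simp add: I'_def)
  have infeas': "\<not> (\<exists>x. \<forall>j\<in>I'. (\<Sum>u\<in>V. a' j u * x u) \<le> b' j)"
  proof
    assume "\<exists>x. \<forall>j\<in>I'. (\<Sum>u\<in>V. a' j u * x u) \<le> b' j"
    then obtain x where hx: "\<forall>j\<in>I'. (\<Sum>u\<in>V. a' j u * x u) \<le> b' j" by blast
    define dot where "dot i = (\<Sum>u\<in>V. a i u * x u)" for i
    have h0: "dot i \<le> b i" if "i \<in> I0" for i
      using hx[rule_format, of "2*i"] that by (simp add: I'_def a'_def b'_def cb_even dot_def)
    have hpn: "(- a n v) * dot p + a p v * dot n \<le> (- a n v) * b p + a p v * b n"
      if "p \<in> Ip" "n \<in> In" for p n
    proof -
      have "enc p n \<in> I'" using that by (force simp: I'_def)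
      then have "(\<Sum>u\<in>V. a' (enc p n) u * x u) \<le> b' (enc p n)" using hx by blast
      moreover have "(\<Sum>u\<in>V. a' (enc p n) u * x u) = (- a n v) * dot p + a p v * dot n"
      proof -
        have "(\<Sum>u\<in>V. a' (enc p n) u * x u) = (\<Sum>u\<in>V. (- a n v) * (a p u * x u) + a p v * (a n u * x u))"
          by (simp add: a'_def cb_odd algebra_simps)
        also have "\<dots> = (- a n v) * dot p + a p v * dot n"
          by (simp only: sum.distrib sum_distrib_left[symmetric] dot_def)
        finally show ?thesis .
      qed
      ultimately show ?thesis by (simp add: b'_def cb_odd)
    qed
    define lo where "lo n = (b n - dot n) / a n v" for n
    define up where "up p = (b p - dot p) / a p v" for p
    have lu: "lo n \<le> up p" if "p \<in> Ip" "n \<in> In" for p n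
    proof -
      have ap: "a p v > 0" and an: "a n v < 0" using that by (auto simp: Ip_def In_def)
      have "(- a n v) * dot p + a p v * dot n \<le> (- a n v) * b p + a p v * b n" using hpn[OF that] .
      then have "- a p v * (b n - dot n) \<le> (- a n v) * (b p - dot p)" by (simp add: algebra_simps)
      then show ?thesis using ap an unfolding lo_def up_def
        by (simp add: divide_simps) (simp add: algebra_simps)
    qed
    define t where "t = (if In = {} then (if Ip = {} then 0 else Min (up ` Ip)) else Max (lo ` In))"
    have tlo: "lo n \<le> t" if "n \<in> In" for n
      using that fin by (auto simp: t_def)
    have tup: "t \<le> up p" if "p \<in> Ip" for p
    proof (cases "In = {}")
      case True then show ?thesis using that fin by (auto simp: t_def)
    next
      case False
      then have "Max (lo ` In) \<le> up p" using fin lu[OF that] by (subst Max_le_iff) auto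
      then show ?thesis using False by (simp add: t_def)
    qed
    have "\<forall>i\<in>I. (\<Sum>u\<in>insert v V. a i u * (x(v:=t)) u) \<le> b i"
    proof
      fix i assume iI: "i \<in> I"
      have eq: "(\<Sum>u\<in>insert v V. a i u * (x(v:=t)) u) = a i v * t + dot i"
        using insert.hyps by (simp add: dot_def) (intro sum.cong, auto)
      consider "a i v = 0" | "a i v > 0" | "a i v < 0" by linarith
      then show "(\<Sum>u\<in>insert v V. a i u * (x(v:=t)) u) \<le> b i"
      proof cases
        case 1 then show ?thesis using eq h0[of i] iI by (simp add: I0_def)
      next
        case 2
        then have "t \<le> up i" using tup iI by (simp add: Ip_def)
        then have "a i v * t \<le> b i - dot i" using 2 by (simp add: up_def field_simps)
        then show ?thesis using eq by simp
      next
        case 3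
        then have "lo i \<le> t" using tlo iI by (simp add: In_def)
        then have "a i v * t \<le> b i - dot i" using 3 by (simp add: lo_def field_simps)
        then show ?thesis using eq by simp
      qed
    qed
    then show False using insert.prems(2) by blast
  qed
  from insert.IH[OF finI' infeas'] obtain l' where
    l'1: "\<forall>j\<in>I'. 0 \<le> l' j" and l'2: "\<forall>u\<in>V. (\<Sum>j\<in>I'. l' j * a' j u) = 0"
    and l'3: "(\<Sum>j\<in>I'. l' j * b' j) < 0" by blast
  define l where "l i = (if a i v = 0 then l' (2*i) else if a i v > 0
      then (\<Sum>n\<in>In. l' (enc i n) * (- a n v)) else (\<Sum>p\<in>Ip. l' (enc p i) * a p v))" for i
  have inj_enc: "inj_on (\<lambda>(p,n). enc p n) X" for X
    by (auto simp: inj_on_def enc_def dest: inj_onD[OF inj_prod_encode, simplified])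
  have key: "(\<Sum>j\<in>I'. l' j * cb F j) = (\<Sum>i\<in>I. l i * F i)" for F
  proof -
    have disj: "(\<lambda>i. 2*i) ` I0 \<inter> (\<lambda>(p,n). enc p n) ` (Ip \<times> In) = {}"
      by (auto simp: enc_def) presburger
    have "(\<Sum>j\<in>I'. l' j * cb F j) = (\<Sum>j\<in>(\<lambda>i. 2*i) ` I0. l' j * cb F j) + (\<Sum>j\<in>(\<lambda>(p,n). enc p n) ` (Ip \<times> In). l' j * cb F j)"
      unfolding I'_def using fin disj by (intro sum.union_disjoint) auto
    also have "(\<Sum>j\<in>(\<lambda>i. 2*i) ` I0. l' j * cb F j) = (\<Sum>i\<in>I0. l' (2*i) * F i)"
      by (subst sum.reindex) (auto simp: inj_on_def cb_even)
    also have "(\<Sum>j\<in>(\<lambda>(p,n). enc p n) ` (Ip \<times> In). l' j * cb F j)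
       = (\<Sum>(p,n)\<in>Ip \<times> In. l' (enc p n) * ((- a n v) * F p + a p v * F n))"
      by (subst sum.reindex[OF inj_enc]) (simp add: case_prod_unfold cb_odd)
    also have "\<dots> = (\<Sum>p\<in>Ip. \<Sum>n\<in>In. l' (enc p n) * (- a n v) * F p)
                  + (\<Sum>n\<in>In. \<Sum>p\<in>Ip. l' (enc p n) * a p v * F n)"
    proof -
      have "(\<Sum>(p,n)\<in>Ip \<times> In. l' (enc p n) * ((- a n v) * F p + a p v * F n))
         = (\<Sum>p\<in>Ip. \<Sum>n\<in>In. l' (enc p n) * (- a n v) * F p + l' (enc p n) * a p v * F n)"
        by (simp add: sum.cartesian_product[symmetric] algebra_simps)
      also have "\<dots> = (\<Sum>p\<in>Ip. \<Sum>n\<in>In. l' (enc p n) * (- a n v) * F p)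
          + (\<Sum>p\<in>Ip. \<Sum>n\<in>In. l' (enc p n) * a p v * F n)"
        by (simp only: sum.distrib)
      also have "(\<Sum>p\<in>Ip. \<Sum>n\<in>In. l' (enc p n) * a p v * F n) = (\<Sum>n\<in>In. \<Sum>p\<in>Ip. l' (enc p n) * a p v * F n)"
        by (rule sum.swap)
      finally show ?thesis .
    qed
    also have "\<dots> = (\<Sum>p\<in>Ip. l p * F p) + (\<Sum>n\<in>In. l n * F n)"
      by (simp add: l_def Ip_def In_def sum_distrib_right)
    also have "(\<Sum>i\<in>I0. l' (2*i) * F i) = (\<Sum>i\<in>I0. l i * F i)"
      by (simp add: l_def I0_def)
    finally have "(\<Sum>j\<in>I'. l' j * cb F j) = (\<Sum>i\<in>I0. l i * F i) + (\<Sum>p\<in>Ip. l p * F p) + (\<Sum>n\<in>In. l n * F n)"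
      by simp
    also have "\<dots> = (\<Sum>i\<in>I. l i * F i)"
    proof -
      have "I = I0 \<union> Ip \<union> In" by (auto simp: I0_def Ip_def In_def)
      moreover have "(\<Sum>i\<in>I0 \<union> Ip \<union> In. l i * F i) = (\<Sum>i\<in>I0. l i * F i) + (\<Sum>p\<in>Ip. l p * F p) + (\<Sum>n\<in>In. l n * F n)"
        using fin by (subst sum.union_disjoint, auto simp: I0_def Ip_def In_def)+
      ultimately show ?thesis by simp
    qed
    finally show ?thesis .
  qed
  show ?case
  proof (intro exI conjI ballI)
    fix i assume iI: "i \<in> I"
    have m1: "0 \<le> l' (enc p n)" if "p \<in> Ip" "n \<in> In" for p n
      using l'1 that unfolding I'_def by blast
    have m2: "0 \<le> l' (2*i)" if "i \<in> I0" for i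
      using l'1 that unfolding I'_def by blast
    show "0 \<le> l i"
    proof (cases "a i v = 0")
      case True then show ?thesis using m2[of i] iI by (simp add: l_def I0_def)
    next
      case False
      show ?thesis
      proof (cases "a i v > 0")
        case True
        then have "i \<in> Ip" using iI by (simp add: Ip_def)
        then show ?thesis using False True m1
          by (simp add: l_def, intro sum_nonneg) (auto simp: In_def intro!: mult_nonneg_nonpos)
      next
        case F2: False
        then have "i \<in> In" using iI False by (simp add: In_def)
        then show ?thesis using False F2 m1
          by (simp add: l_def, intro sum_nonneg mult_nonneg_nonneg) (auto simp: Ip_def)
      qed
    qed
  next
    fix u assume "u \<in> insert v V"
    then consider "u = v" | "u \<in> V" by blast
    then show "(\<Sum>i\<in>I. l i * a i u) = 0"
    proof cases
      case 1
      have "(\<Sum>i\<in>I. l i * a i u) = (\<Sum>j\<in>I'. l' j * cb (\<lambda>i. a i u) j)" by (rule key[symmetric])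
      also have "\<dots> = 0" using 1
        by (intro sum.neutral) (auto simp: I'_def I0_def cb_even cb_odd)
      finally show ?thesis .
    next
      case 2
      then show ?thesis using l'2 key[of "\<lambda>i. a i u"] by (simp add: a'_def)
    qed
  next
    show "(\<Sum>i\<in>I. l i * b i) < 0" using l'3 key[of b] by (simp add: b'_def)
  qed
qed

lemma fm_gen:
  fixes a :: "'i \<Rightarrow> 'v \<Rightarrow> real" and b :: "'i \<Rightarrow> real"
  assumes "finite V" "finite I" "\<not> (\<exists>x. \<forall>i\<in>I. (\<Sum>u\<in>V. a i u * x u) \<le> b i)"
  shows "\<exists>l. (\<forall>i\<in>I. 0 \<le> l i) \<and> (\<forall>u\<in>V. (\<Sum>i\<in>I. l i * a i u) = 0) \<and> (\<Sum>i\<in>I. l i * b i) < 0"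
proof -
  obtain h where h: "bij_betw h {0..<card I} I" using ex_bij_betw_nat_finite[OF assms(2)] by blast
  have img: "h ` {0..<card I} = I" using h by (simp add: bij_betw_def)
  have "\<not> (\<exists>x. \<forall>j\<in>{0..<card I}. (\<Sum>u\<in>V. a (h j) u * x u) \<le> b (h j))"
  proof
    assume "\<exists>x. \<forall>j\<in>{0..<card I}. (\<Sum>u\<in>V. a (h j) u * x u) \<le> b (h j)"
    then obtain x where "\<forall>j\<in>{0..<card I}. (\<Sum>u\<in>V. a (h j) u * x u) \<le> b (h j)" by blast
    then have "\<forall>i\<in>I. (\<Sum>u\<in>V. a i u * x u) \<le> b i"
    proof (intro ballI)
      fix i assume "i \<in> I"
      then obtain j where "j \<in> {0..<card I}" "i = h j" using img by blast
      then show "(\<Sum>u\<in>V. a i u * x u) \<le> b i" using \<open>\<forall>j\<in>{0..<card I}. _\<close> by blast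
    qed
    then show False using assms(3) by blast
  qed
  from fm_farkas[OF assms(1) finite_atLeastLessThan this] obtain l where
    l1: "\<forall>j\<in>{0..<card I}. 0 \<le> l j" and l2: "\<forall>u\<in>V. (\<Sum>j\<in>{0..<card I}. l j * a (h j) u) = 0"
    and l3: "(\<Sum>j\<in>{0..<card I}. l j * b (h j)) < 0" by blast
  define l' where "l' i = l (inv_into {0..<card I} h i)" for i
  have inv: "l' (h j) = l j" if "j \<in> {0..<card I}" for j
    using h that by (simp add: l'_def bij_betw_def inv_into_f_f)
  have sm: "(\<Sum>i\<in>I. l' i * F i) = (\<Sum>j\<in>{0..<card I}. l j * F (h j))" for F
  proof -
    have "(\<Sum>i\<in>I. l' i * F i) = (\<Sum>j\<in>{0..<card I}. l' (h j) * F (h j))"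
      by (rule sum.reindex_bij_betw[OF h, symmetric])
    also have "\<dots> = (\<Sum>j\<in>{0..<card I}. l j * F (h j))" by (rule sum.cong) (auto simp: inv)
    finally show ?thesis .
  qed
  show ?thesis
  proof (intro exI[of _ l'] conjI ballI)
    fix i assume "i \<in> I"
    then obtain j where "j \<in> {0..<card I}" "i = h j" using img by blast
    then show "0 \<le> l' i" using l1 inv by simp
  next
    fix u assume "u \<in> V" then show "(\<Sum>i\<in>I. l' i * a i u) = 0" using l2 sm[of "\<lambda>i. a i u"] by simp
  next
    show "(\<Sum>i\<in>I. l' i * b i) < 0" using l3 sm[of b] by simp
  qed
qed

lemma farkas_cone:
  fixes g :: "'c \<Rightarrow> 'w \<Rightarrow> real" and t :: "'w \<Rightarrow> real"
  assumes finC: "finite C" and finW: "finite W"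
    and hyp: "\<forall>y. (\<forall>c\<in>C. (\<Sum>w\<in>W. g c w * y w) \<le> 0) \<longrightarrow> (\<Sum>w\<in>W. t w * y w) \<le> 0"
  shows "\<exists>l. (\<forall>c\<in>C. 0 \<le> l c) \<and> (\<forall>w\<in>W. (\<Sum>c\<in>C. l c * g c w) = t w)"
proof (rule ccontr)
  assume nex: "\<not> ?thesis"
  define A :: "('w + 'w) + 'c \<Rightarrow> 'c \<Rightarrow> real" where
    "A = (\<lambda>i c. case i of Inl (Inl w) \<Rightarrow> g c w | Inl (Inr w) \<Rightarrow> - g c w | Inr c' \<Rightarrow> if c = c' then -1 else 0)"
  define B :: "('w + 'w) + 'c \<Rightarrow> real" where
    "B = (\<lambda>i. case i of Inl (Inl w) \<Rightarrow> t w | Inl (Inr w) \<Rightarrow> - t w | Inr c' \<Rightarrow> 0)"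
  define I where "I = (W <+> W) <+> C"
  have finI: "finite I" using finC finW by (simp add: I_def)
  have "\<not> (\<exists>x. \<forall>i\<in>I. (\<Sum>c\<in>C. A i c * x c) \<le> B i)"
  proof
    assume "\<exists>x. \<forall>i\<in>I. (\<Sum>c\<in>C. A i c * x c) \<le> B i"
    then obtain x where hx: "\<forall>i\<in>I. (\<Sum>c\<in>C. A i c * x c) \<le> B i" by blast
    have "(\<forall>c\<in>C. 0 \<le> x c) \<and> (\<forall>w\<in>W. (\<Sum>c\<in>C. x c * g c w) = t w)"
    proof (intro conjI ballI)
      fix c assume c: "c \<in> C"
      have "(\<Sum>c'\<in>C. A (Inr c) c' * x c') \<le> B (Inr c)" using hx c by (auto simp: I_def)
      moreover have "(\<Sum>c'\<in>C. A (Inr c) c' * x c') = (\<Sum>c'\<in>C. if c' = c then - x c' else 0)"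
        by (rule sum.cong) (auto simp: A_def)
      ultimately show "0 \<le> x c" using c finC by (simp add: B_def)
    next
      fix w assume w: "w \<in> W"
      have "(\<Sum>c\<in>C. A (Inl (Inl w)) c * x c) \<le> B (Inl (Inl w))" using hx w by (auto simp: I_def)
      moreover have "(\<Sum>c\<in>C. A (Inl (Inr w)) c * x c) \<le> B (Inl (Inr w))" using hx w by (auto simp: I_def)
      ultimately show "(\<Sum>c\<in>C. x c * g c w) = t w"
        by (simp add: A_def B_def sum_negf mult.commute)
    qed
    with nex show False by blast
  qed
  from fm_gen[OF finC finI this] obtain l where
    l1: "\<forall>i\<in>I. 0 \<le> l i" and l2: "\<forall>c\<in>C. (\<Sum>i\<in>I. l i * A i c) = 0"
    and l3: "(\<Sum>i\<in>I. l i * B i) < 0" by blast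
  define y where "y w = l (Inl (Inr w)) - l (Inl (Inl w))" for w
  have "\<forall>c\<in>C. (\<Sum>w\<in>W. g c w * y w) \<le> 0"
  proof
    fix c assume c: "c \<in> C"
    have "(\<Sum>i\<in>I. l i * A i c) = (\<Sum>w\<in>W. l (Inl (Inl w)) * g c w) + (\<Sum>w\<in>W. l (Inl (Inr w)) * (- g c w))
       + (\<Sum>c'\<in>C. l (Inr c') * (if c = c' then -1 else 0))"
      unfolding I_def using finC finW by (simp add: sum.Plus A_def o_def)
    also have "(\<Sum>c'\<in>C. l (Inr c') * (if c = c' then -1 else 0)) = - l (Inr c)"
    proof -
      have "(\<Sum>c'\<in>C. l (Inr c') * (if c = c' then -1 else 0)) = (\<Sum>c'\<in>C. if c = c' then - l (Inr c') else 0)"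
        by (rule sum.cong) auto
      then show ?thesis using c finC by simp
    qed
    finally have "(\<Sum>w\<in>W. g c w * y w) = - l (Inr c)"
      using l2 c by (simp add: y_def algebra_simps sum_subtractf sum_negf)
    moreover have "0 \<le> l (Inr c)" using l1 c InrI unfolding I_def by blast
    ultimately show "(\<Sum>w\<in>W. g c w * y w) \<le> 0" by simp
  qed
  moreover have "(\<Sum>w\<in>W. t w * y w) = - (\<Sum>i\<in>I. l i * B i)"
    unfolding I_def using finC finW
    by (simp add: sum.Plus B_def o_def y_def algebra_simps sum_subtractf sum_negf)
  ultimately show False using hyp l3 by fastforce
qed

lemma sum_Some_img: "(\<Sum>w\<in>Some ` A. f w) = (\<Sum>v\<in>A. f (Some v))"
  by (subst sum.reindex) (auto simp: inj_on_def)

lemma sum_option_W: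
  assumes "finite Vs"
  shows "(\<Sum>w\<in>insert None (Some ` Vs). f w) = f None + (\<Sum>v\<in>Vs. f (Some v))"
  using assms by (simp add: sum.reindex)

lemma lp_strong:
  fixes P :: "('v, 'c) lp"
  assumes finV: "finite (lp_vars P)" and finC: "finite (lp_cons P)"
    and feas: "lp_feasible P x0"
    and bnd: "\<forall>x. lp_feasible P x \<longrightarrow> lp_objective P x \<le> M"
  shows "\<exists>u. lp_dual_feasible P u \<and> lp_dual_objective P u \<le> M"
proof -
  let ?Vs = "lp_vars P" and ?Cs = "lp_cons P" and ?E = "lp_eqs P" and ?Fr = "lp_free P"
  let ?mat = "lp_mat P" and ?rhs = "lp_rhs P" and ?obj = "lp_obj P"
  define g :: "('c + 'c) + ('v + unit) \<Rightarrow> 'v option \<Rightarrow> real" where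
    "g i w = (case i of
        Inl (Inl c) \<Rightarrow> (case w of None \<Rightarrow> ?rhs c | Some v \<Rightarrow> ?mat c v)
      | Inl (Inr c) \<Rightarrow> (if c \<in> ?E then (case w of None \<Rightarrow> - ?rhs c | Some v \<Rightarrow> - ?mat c v) else 0)
      | Inr (Inl v) \<Rightarrow> (if v \<in> ?Fr then 0 else (case w of None \<Rightarrow> 0 | Some v' \<Rightarrow> if v' = v then -1 else 0))
      | Inr (Inr _) \<Rightarrow> (case w of None \<Rightarrow> 1 | Some _ \<Rightarrow> 0))" for i w
  define t :: "'v option \<Rightarrow> real" where "t w = (case w of None \<Rightarrow> M | Some v \<Rightarrow> ?obj v)" for w
  define G where "G = (?Cs <+> ?Cs) <+> (?Vs <+> (UNIV :: unit set))"
  define W where "W = insert None (Some ` ?Vs)"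
  have finG: "finite G" using finV finC by (simp add: G_def InlI InrI)
  have finW: "finite W" using finV by (simp add: W_def)
  have hyp: "\<forall>y. (\<forall>i\<in>G. (\<Sum>w\<in>W. g i w * y w) \<le> 0) \<longrightarrow> (\<Sum>w\<in>W. t w * y w) \<le> 0"
  proof (intro allI impI)
    fix y assume hy: "\<forall>i\<in>G. (\<Sum>w\<in>W. g i w * y w) \<le> 0"
    define z where "z v = y (Some v)" for v
    define s where "s = y None"
    have r1: "(\<Sum>v\<in>?Vs. ?mat c v * z v) + ?rhs c * s \<le> 0" if "c \<in> ?Cs" for c
    proof -
      have "Inl (Inl c) \<in> G" using that by (simp add: G_def InlI InrI)
      then have "(\<Sum>w\<in>W. g (Inl (Inl c)) w * y w) \<le> 0" using hy by blast
      then show ?thesis using finV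
        by (simp add: W_def sum_option_W sum_Some_img g_def z_def s_def add.commute)
    qed
    have r2: "(\<Sum>v\<in>?Vs. ?mat c v * z v) + ?rhs c * s \<ge> 0" if "c \<in> ?Cs" "c \<in> ?E" for c
    proof -
      have "Inl (Inr c) \<in> G" using that by (simp add: G_def InlI InrI)
      then have "(\<Sum>w\<in>W. g (Inl (Inr c)) w * y w) \<le> 0" using hy by blast
      then show ?thesis using finV that
        by (simp add: W_def sum_option_W sum_Some_img g_def z_def s_def sum_negf)
    qed
    have r3: "0 \<le> z v" if "v \<in> ?Vs" "v \<notin> ?Fr" for v
    proof -
      have "Inr (Inl v) \<in> G" using that by (simp add: G_def InlI InrI)
      then have "(\<Sum>w\<in>W. g (Inr (Inl v)) w * y w) \<le> 0" using hy by blast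
      moreover have "(\<Sum>w\<in>W. g (Inr (Inl v)) w * y w) = g (Inr (Inl v)) None * y None + (\<Sum>v'\<in>?Vs. g (Inr (Inl v)) (Some v') * y (Some v'))"
        unfolding W_def by (rule sum_option_W[OF finV])
      moreover have "\<dots> = (\<Sum>v'\<in>?Vs. if v' = v then - z v' else 0)"
        using that by (auto simp: g_def z_def intro!: sum.cong)
      ultimately show ?thesis using that finV by simp
    qed
    have r4: "s \<le> 0"
    proof -
      have "Inr (Inr ()) \<in> G" by (simp add: G_def InlI InrI)
      then have "(\<Sum>w\<in>W. g (Inr (Inr ())) w * y w) \<le> 0" using hy by blast
      then show ?thesis using finV by (simp add: W_def sum_option_W sum_Some_img g_def s_def)
    qed
    have goal: "(\<Sum>w\<in>W. t w * y w) = (\<Sum>v\<in>?Vs. ?obj v * z v) + M * s"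
      using finV by (simp add: W_def sum_option_W sum_Some_img t_def z_def s_def)
    show "(\<Sum>w\<in>W. t w * y w) \<le> 0"
    proof (cases "s < 0")
      case True
      define x where "x v = z v / (- s)" for v
      have sx: "(\<Sum>v\<in>?Vs. f v * x v) = (\<Sum>v\<in>?Vs. f v * z v) / (- s)" for f
        by (simp add: x_def sum_divide_distrib sum_negf)
      have "lp_feasible P x"
        unfolding lp_feasible_def
      proof (intro conjI ballI)
        fix v assume "v \<in> ?Vs - ?Fr" then show "0 \<le> x v" using r3 True by (simp add: x_def divide_nonneg_neg)
      next
        fix c assume c: "c \<in> ?Cs"
        show "if c \<in> ?E then (\<Sum>v\<in>?Vs. ?mat c v * x v) = ?rhs c else (\<Sum>v\<in>?Vs. ?mat c v * x v) \<le> ?rhs c"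
        proof (cases "c \<in> ?E")
          case True
          then have "(\<Sum>v\<in>?Vs. ?mat c v * z v) = - ?rhs c * s" using r1[OF c] r2[OF c] by linarith
          then show ?thesis using True \<open>s < 0\<close> by (simp add: sx)
        next
          case False
          have "(\<Sum>v\<in>?Vs. ?mat c v * z v) \<le> ?rhs c * (- s)" using r1[OF c] by linarith
          then have "(\<Sum>v\<in>?Vs. ?mat c v * z v) / (- s) \<le> ?rhs c" using \<open>s < 0\<close>
            by (simp add: divide_simps)
          then show ?thesis using False by (simp add: sx)
        qed
      qed
      then have "lp_objective P x \<le> M" using bnd by blast
      then have "(\<Sum>v\<in>?Vs. ?obj v * z v) / (- s) \<le> M" by (simp add: lp_objective_def sx)
      then have "(\<Sum>v\<in>?Vs. ?obj v * z v) \<le> M * (- s)" using True by (simp add: divide_simps)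
      then show ?thesis using goal by simp
    next
      case False
      then have s0: "s = 0" using r4 by simp
      have fk: "lp_feasible P (\<lambda>v. x0 v + k * z v)" if k: "0 \<le> k" for k
        unfolding lp_feasible_def
      proof (intro conjI ballI)
        fix v assume v: "v \<in> ?Vs - ?Fr"
        have "0 \<le> x0 v" using feas v by (simp add: lp_feasible_def)
        then show "0 \<le> x0 v + k * z v" using r3 v k by simp
      next
        fix c assume c: "c \<in> ?Cs"
        have eq: "(\<Sum>v\<in>?Vs. ?mat c v * (x0 v + k * z v)) = (\<Sum>v\<in>?Vs. ?mat c v * x0 v) + k * (\<Sum>v\<in>?Vs. ?mat c v * z v)"
          by (simp add: algebra_simps sum.distrib sum_distrib_left)
        have fc: "if c \<in> ?E then (\<Sum>v\<in>?Vs. ?mat c v * x0 v) = ?rhs c else (\<Sum>v\<in>?Vs. ?mat c v * x0 v) \<le> ?rhs c"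
          using feas c by (simp add: lp_feasible_def)
        show "if c \<in> ?E then (\<Sum>v\<in>?Vs. ?mat c v * (x0 v + k * z v)) = ?rhs c else (\<Sum>v\<in>?Vs. ?mat c v * (x0 v + k * z v)) \<le> ?rhs c"
        proof (cases "c \<in> ?E")
          case True
          then have "(\<Sum>v\<in>?Vs. ?mat c v * z v) = 0" using r1[OF c] r2[OF c] s0 by simp
          then show ?thesis using True fc eq by simp
        next
          case False
          have "(\<Sum>v\<in>?Vs. ?mat c v * z v) \<le> 0" using r1[OF c] s0 by simp
          then have "k * (\<Sum>v\<in>?Vs. ?mat c v * z v) \<le> 0" using k by (simp add: mult_nonneg_nonpos)
          then show ?thesis using False fc eq by simp
        qed
      qed
      have ok: "(\<Sum>v\<in>?Vs. ?obj v * x0 v) + k * (\<Sum>v\<in>?Vs. ?obj v * z v) \<le> M" if "0 \<le> k" for k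
      proof -
        have "lp_objective P (\<lambda>v. x0 v + k * z v) \<le> M" using bnd fk[OF that] by blast
        then show ?thesis by (simp add: lp_objective_def algebra_simps sum.distrib sum_distrib_left)
      qed
      have "(\<Sum>v\<in>?Vs. ?obj v * z v) \<le> 0"
      proof (rule ccontr)
        assume pos: "\<not> (\<Sum>v\<in>?Vs. ?obj v * z v) \<le> 0"
        define O1 where "O1 = (\<Sum>v\<in>?Vs. ?obj v * z v)"
        define O0 where "O0 = (\<Sum>v\<in>?Vs. ?obj v * x0 v)"
        have O1p: "O1 > 0" using pos by (simp add: O1_def)
        define k where "k = (\<bar>M - O0\<bar> + 1) / O1"
        have k0: "0 \<le> k" using O1p by (simp add: k_def)
        have "k * O1 = \<bar>M - O0\<bar> + 1" using O1p by (simp add: k_def)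
        moreover have "O0 + k * O1 \<le> M" using ok[OF k0] by (simp add: O0_def O1_def)
        ultimately show False by linarith
      qed
      then show ?thesis using goal s0 by simp
    qed
  qed
  from farkas_cone[OF finG finW hyp] obtain l where
    l1: "\<forall>i\<in>G. 0 \<le> l i" and l2: "\<forall>w\<in>W. (\<Sum>i\<in>G. l i * g i w) = t w" by blast
  define u where "u c = l (Inl (Inl c)) - (if c \<in> ?E then l (Inl (Inr c)) else 0)" for c
  have col: "(\<Sum>c\<in>?Cs. ?mat c v * u c) = ?obj v + (if v \<in> ?Fr then 0 else l (Inr (Inl v)))"
    if v: "v \<in> ?Vs" for v
  proof -
    have "Some v \<in> W" using v by (simp add: W_def)
    then have "(\<Sum>i\<in>G. l i * g i (Some v)) = ?obj v" using l2 by (simp add: t_def)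
    moreover have "(\<Sum>i\<in>G. l i * g i (Some v)) =
        (\<Sum>c\<in>?Cs. l (Inl (Inl c)) * ?mat c v) + (\<Sum>c\<in>?Cs. l (Inl (Inr c)) * (if c \<in> ?E then - ?mat c v else 0))
        + (\<Sum>v'\<in>?Vs. l (Inr (Inl v')) * (if v' \<in> ?Fr then 0 else if v = v' then -1 else 0))"
      unfolding G_def using finV finC by (simp add: sum.Plus g_def o_def cong: if_cong)
    moreover have "(\<Sum>v'\<in>?Vs. l (Inr (Inl v')) * (if v' \<in> ?Fr then 0 else if v = v' then -1 else 0))
        = - (if v \<in> ?Fr then 0 else l (Inr (Inl v)))"
    proof -
      have "(\<Sum>v'\<in>?Vs. l (Inr (Inl v')) * (if v' \<in> ?Fr then 0 else if v = v' then -1 else 0))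
          = (\<Sum>v'\<in>?Vs. if v = v' then - (if v' \<in> ?Fr then 0 else l (Inr (Inl v'))) else 0)"
        by (rule sum.cong) auto
      then show ?thesis using v finV by simp
    qed
    moreover have "(\<Sum>c\<in>?Cs. ?mat c v * u c) = (\<Sum>c\<in>?Cs. l (Inl (Inl c)) * ?mat c v) + (\<Sum>c\<in>?Cs. l (Inl (Inr c)) * (if c \<in> ?E then - ?mat c v else 0))"
      by (simp add: u_def algebra_simps sum.distrib[symmetric] sum_subtractf[symmetric] if_distrib cong: if_cong)
    ultimately show ?thesis by linarith
  qed
  have dobj: "lp_dual_objective P u + l (Inr (Inr ())) = M"
  proof -
    have "None \<in> W" by (simp add: W_def)
    then have "(\<Sum>i\<in>G. l i * g i None) = M" using l2 by (simp add: t_def)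
    moreover have "(\<Sum>i\<in>G. l i * g i None) =
        (\<Sum>c\<in>?Cs. l (Inl (Inl c)) * ?rhs c) + (\<Sum>c\<in>?Cs. l (Inl (Inr c)) * (if c \<in> ?E then - ?rhs c else 0))
        + l (Inr (Inr ()))"
      unfolding G_def using finV finC by (simp add: sum.Plus g_def o_def UNIV_unit cong: if_cong)
    moreover have "lp_dual_objective P u = (\<Sum>c\<in>?Cs. l (Inl (Inl c)) * ?rhs c) + (\<Sum>c\<in>?Cs. l (Inl (Inr c)) * (if c \<in> ?E then - ?rhs c else 0))"
      by (simp add: lp_dual_objective_def u_def algebra_simps sum.distrib[symmetric] sum_subtractf[symmetric] if_distrib cong: if_cong)
    ultimately show ?thesis by linarith
  qed
  have "l (Inr (Inr ())) \<ge> 0" using l1 by (simp add: G_def InlI InrI)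
  then have "lp_dual_objective P u \<le> M" using dobj by linarith
  moreover have "lp_dual_feasible P u"
    unfolding lp_dual_feasible_def
  proof (intro conjI ballI)
    fix c assume "c \<in> ?Cs - ?E"
    then show "0 \<le> u c" using l1 by (simp add: u_def G_def InlI InrI)
  next
    fix v assume v: "v \<in> ?Vs"
    have "0 \<le> l (Inr (Inl v))" using l1 v by (simp add: G_def InlI InrI)
    then show "if v \<in> ?Fr then (\<Sum>c\<in>?Cs. ?mat c v * u c) = ?obj v else ?obj v \<le> (\<Sum>c\<in>?Cs. ?mat c v * u c)"
      using col[OF v] by simp
  qed
  ultimately show ?thesis by blast
qed

lemma sum_if_subset:
  assumes "finite I" "S \<subseteq> I"
  shows "(\<Sum>i\<in>I. if i \<in> S then f i else 0) = (\<Sum>i\<in>S. f i)"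
proof -
  have "(\<Sum>i\<in>I. if i \<in> S then f i else 0) = (\<Sum>i\<in>I \<inter> S. f i)"
    using assms(1) by (rule sum.inter_restrict[symmetric])
  also have "I \<inter> S = S" using assms(2) by blast
  finally show ?thesis .
qed

lemma lin1:
  fixes p :: "nat \<Rightarrow> real" and w :: "nat set \<Rightarrow> real"
  assumes "finite I"
  shows "(\<Sum>i\<in>I. p i * (\<Sum>S\<in>Pow I. if i \<in> S then w S else 0)) = (\<Sum>S\<in>Pow I. w S * (\<Sum>i\<in>S. p i))"
proof -
  have e: "p i * (\<Sum>S\<in>Pow I. if i \<in> S then w S else 0) = (\<Sum>S\<in>Pow I. if i \<in> S then w S * p i else 0)" for i
    by (auto simp: sum_distrib_left intro!: sum.cong)
  have "(\<Sum>i\<in>I. p i * (\<Sum>S\<in>Pow I. if i \<in> S then w S else 0)) = (\<Sum>i\<in>I. \<Sum>S\<in>Pow I. if i \<in> S then w S * p i else 0)"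
    by (simp only: e)
  also have "\<dots> = (\<Sum>S\<in>Pow I. \<Sum>i\<in>I. if i \<in> S then w S * p i else 0)" by (rule sum.swap)
  also have "\<dots> = (\<Sum>S\<in>Pow I. \<Sum>i\<in>S. w S * p i)"
    using assms by (intro sum.cong refl sum_if_subset) auto
  finally show ?thesis by (simp add: sum_distrib_left)
qed

lemma lin2:
  fixes q :: "nat \<Rightarrow> nat \<Rightarrow> real" and w :: "nat set \<Rightarrow> real"
  assumes "finite I"
  shows "(\<Sum>i\<in>I. \<Sum>j\<in>I. q i j * (\<Sum>S\<in>Pow I. if i \<in> S \<and> j \<in> S then w S else 0))
       = (\<Sum>S\<in>Pow I. w S * (\<Sum>i\<in>S. \<Sum>j\<in>S. q i j))"
proof -
  have "(\<Sum>i\<in>I. \<Sum>j\<in>I. q i j * (\<Sum>S\<in>Pow I. if i \<in> S \<and> j \<in> S then w S else 0))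
      = (\<Sum>i\<in>I. \<Sum>j\<in>I. \<Sum>S\<in>Pow I. if i \<in> S then (if j \<in> S then w S * q i j else 0) else 0)"
    by (auto simp: sum_distrib_left intro!: sum.cong)
  also have "\<dots> = (\<Sum>i\<in>I. \<Sum>S\<in>Pow I. \<Sum>j\<in>I. if i \<in> S then (if j \<in> S then w S * q i j else 0) else 0)"
    by (intro sum.cong refl sum.swap)
  also have "\<dots> = (\<Sum>S\<in>Pow I. \<Sum>i\<in>I. \<Sum>j\<in>I. if i \<in> S then (if j \<in> S then w S * q i j else 0) else 0)"
    by (rule sum.swap)
  also have "\<dots> = (\<Sum>S\<in>Pow I. \<Sum>i\<in>I. if i \<in> S then (\<Sum>j\<in>S. w S * q i j) else 0)"
    using assms by (intro sum.cong refl) (auto simp: sum_if_subset)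
  also have "\<dots> = (\<Sum>S\<in>Pow I. \<Sum>i\<in>S. \<Sum>j\<in>S. w S * q i j)"
    using assms by (intro sum.cong refl sum_if_subset) auto
  finally show ?thesis by (simp add: sum_distrib_left)
qed

lemma sum_bump:
  assumes "finite A" "T \<in> A"
  shows "(\<Sum>S\<in>A. if P S then w S + (if S = T then t else 0) else 0) = (\<Sum>S\<in>A. if P S then w S else 0) + (if P T then (t::real) else 0)"
proof -
  have "(\<Sum>S\<in>A. if P S then w S + (if S = T then t else 0) else 0)
      = (\<Sum>S\<in>A. (if P S then w S else 0) + (if S = T then (if P T then t else 0) else 0))"
    by (intro sum.cong refl) auto
  also have "\<dots> = (\<Sum>S\<in>A. if P S then w S else 0) + (if P T then t else 0)"
    using assms by (simp add: sum.distrib)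
  finally show ?thesis .
qed

lemma decomp:
  assumes "finite I"
  shows "\<forall>(x::nat \<Rightarrow> real) (x0::real). card {i\<in>I. 0 < x i} = m \<longrightarrow> 0 \<le> x0 \<longrightarrow> (\<forall>i\<in>I. 0 \<le> x i \<and> x i \<le> x0) \<longrightarrow>
    (\<exists>w. (\<forall>S. 0 \<le> w S) \<and> x0 = (\<Sum>S\<in>Pow I. w S)
      \<and> (\<forall>i\<in>I. x i = (\<Sum>S\<in>Pow I. if i \<in> S then w S else 0))
      \<and> (\<forall>i\<in>I. \<forall>j\<in>I. min (x i) (x j) = (\<Sum>S\<in>Pow I. if i \<in> S \<and> j \<in> S then w S else 0)))"
proof (induction m rule: less_induct)
  case (less m)
  show ?case
  proof (intro allI impI)
    fix x :: "nat \<Rightarrow> real" and x0 :: real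
    assume cm: "card {i\<in>I. 0 < x i} = m" and x00: "0 \<le> x0" and bx: "\<forall>i\<in>I. 0 \<le> x i \<and> x i \<le> x0"
    define T where "T = {i\<in>I. 0 < x i}"
    have finT: "finite T" using assms by (simp add: T_def)
    have TI: "T \<subseteq> I" by (auto simp: T_def)
    show "\<exists>w. (\<forall>S. 0 \<le> w S) \<and> x0 = (\<Sum>S\<in>Pow I. w S)
      \<and> (\<forall>i\<in>I. x i = (\<Sum>S\<in>Pow I. if i \<in> S then w S else 0))
      \<and> (\<forall>i\<in>I. \<forall>j\<in>I. min (x i) (x j) = (\<Sum>S\<in>Pow I. if i \<in> S \<and> j \<in> S then w S else 0))"
    proof (cases "T = {}")
      case True
      then have x0i: "x i = 0" if "i \<in> I" for i using bx that by (force simp: T_def)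
      define w :: "nat set \<Rightarrow> real" where "w S = (if S = {} then x0 else 0)" for S
      have s1: "(\<Sum>S\<in>Pow I. if P S then w S else 0) = (if P {} then x0 else 0)" for P
      proof -
        have "(\<Sum>S\<in>Pow I. if P S then w S else 0) = (\<Sum>S\<in>Pow I. if S = {} then (if P {} then x0 else 0) else 0)"
          by (intro sum.cong refl) (auto simp: w_def)
        also have "\<dots> = (if P {} then x0 else 0)" using assms by simp
        finally show ?thesis .
      qed
      show ?thesis
      proof (intro exI[of _ w] conjI ballI allI)
        show "0 \<le> w S" for S using x00 by (simp add: w_def)
        show "x0 = (\<Sum>S\<in>Pow I. w S)" using s1[of "\<lambda>_. True"] by simp
        show "x i = (\<Sum>S\<in>Pow I. if i \<in> S then w S else 0)" if "i \<in> I" for i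
          using s1[of "\<lambda>S. i \<in> S"] x0i[OF that] by simp
        show "min (x i) (x j) = (\<Sum>S\<in>Pow I. if i \<in> S \<and> j \<in> S then w S else 0)" if "i \<in> I" "j \<in> I" for i j
          using s1[of "\<lambda>S. i \<in> S \<and> j \<in> S"] x0i[OF that(1)] x0i[OF that(2)] by simp
      qed
    next
      case False
      define t where "t = Min (x ` T)"
      have "t \<in> x ` T" unfolding t_def using False finT by (intro Min_in) auto
      then obtain i0 where i0: "i0 \<in> T" "x i0 = t" by auto
      have tle: "t \<le> x i" if "i \<in> T" for i using finT that by (simp add: t_def)
      have tpos: "0 < t" using i0 by (simp add: T_def)
      define x' where "x' i = (if i \<in> T then x i - t else x i)" for i
      define x0' where "x0' = x0 - t"
      have T'sub: "{i\<in>I. 0 < x' i} \<subseteq> T - {i0}"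
        using i0 by (auto simp: x'_def T_def)
      have "card {i\<in>I. 0 < x' i} \<le> card (T - {i0})" using T'sub finT by (intro card_mono) auto
      also have "\<dots> < card T" using i0 finT by (intro card_Diff1_less)
      finally have lt: "card {i\<in>I. 0 < x' i} < m" using cm by (simp add: T_def)
      have x0'0: "0 \<le> x0'" using bx i0 TI by (force simp: x0'_def)
      have bx': "\<forall>i\<in>I. 0 \<le> x' i \<and> x' i \<le> x0'"
        using bx tle x0'0 by (force simp: x'_def x0'_def T_def)
      from less.IH[OF lt] x0'0 bx' obtain w' where
        w'0: "\<forall>S. 0 \<le> w' S" and w'1: "x0' = (\<Sum>S\<in>Pow I. w' S)"
        and w'2: "\<forall>i\<in>I. x' i = (\<Sum>S\<in>Pow I. if i \<in> S then w' S else 0)"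
        and w'3: "\<forall>i\<in>I. \<forall>j\<in>I. min (x' i) (x' j) = (\<Sum>S\<in>Pow I. if i \<in> S \<and> j \<in> S then w' S else 0)"
        by blast
      define w where "w S = w' S + (if S = T then t else 0)" for S
      have TP: "T \<in> Pow I" using TI by simp
      have finP: "finite (Pow I)" using assms by simp
      have bump: "(\<Sum>S\<in>Pow I. if P S then w S else 0) = (\<Sum>S\<in>Pow I. if P S then w' S else 0) + (if P T then t else 0)" for P
        unfolding w_def by (rule sum_bump[OF finP TP])
      have xo: "x i = 0" if "i \<in> I" "i \<notin> T" for i using bx that by (force simp: T_def)
      show ?thesis
      proof (intro exI[of _ w] conjI ballI allI)
        show "0 \<le> w S" for S using w'0 tpos by (simp add: w_def add_nonneg_nonneg)
        show "x0 = (\<Sum>S\<in>Pow I. w S)" using bump[of "\<lambda>_. True"] w'1 by (simp add: x0'_def)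
        show "x i = (\<Sum>S\<in>Pow I. if i \<in> S then w S else 0)" if "i \<in> I" for i
          using bump[of "\<lambda>S. i \<in> S"] w'2 that by (auto simp: x'_def)
        show "min (x i) (x j) = (\<Sum>S\<in>Pow I. if i \<in> S \<and> j \<in> S then w S else 0)" if ij: "i \<in> I" "j \<in> I" for i j
        proof -
          have e: "(\<Sum>S\<in>Pow I. if i \<in> S \<and> j \<in> S then w S else 0) = min (x' i) (x' j) + (if i \<in> T \<and> j \<in> T then t else 0)"
            using bump[of "\<lambda>S. i \<in> S \<and> j \<in> S"] w'3 ij by simp
          show ?thesis
          proof (cases "i \<in> T \<and> j \<in> T")
            case True then show ?thesis using e by (simp add: x'_def min_diff)
          next
            case False
            then have "min (x i) (x j) = 0" "min (x' i) (x' j) = 0"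
              using xo ij bx bx' by (auto simp: x'_def min_def)
            then show ?thesis using e False by simp
          qed
        qed
      qed
    qed
  qed
qed

lemma decomposition:
  fixes x :: "nat \<Rightarrow> real"
  assumes "finite I" "0 \<le> x0" "\<forall>i\<in>I. 0 \<le> x i \<and> x i \<le> x0"
  shows "\<exists>w. (\<forall>S. 0 \<le> w S) \<and> x0 = (\<Sum>S\<in>Pow I. w S)
      \<and> (\<forall>i\<in>I. x i = (\<Sum>S\<in>Pow I. if i \<in> S then w S else 0))
      \<and> (\<forall>i\<in>I. \<forall>j\<in>I. min (x i) (x j) = (\<Sum>S\<in>Pow I. if i \<in> S \<and> j \<in> S then w S else 0))"
  using decomp[OF assms(1)] assms(2,3) by blast

definition cvars :: "nat \<Rightarrow> cvar set" where
  "cvars N = {X0} \<union> X ` {1..N} \<union> {Y i j | i j. i \<in> {1..N} \<and> j \<in> {1..N}}"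

definition cin :: "nat \<Rightarrow> ccon set" where
  "cin N = {Norm} \<union> Cap ` {1..N} \<union> {YI i j | i j. i \<in> {1..N} \<and> j \<in> {1..N}}
                 \<union> {YJ i j | i j. i \<in> {1..N} \<and> j \<in> {1..N}}"

definition zof :: "nat \<Rightarrow> (nat set \<Rightarrow> real) \<Rightarrow> cvar \<Rightarrow> real" where
  "zof N w v = (case v of X0 \<Rightarrow> (\<Sum>S\<in>Pow {1..N}. w S)
      | X i \<Rightarrow> (\<Sum>S\<in>Pow {1..N}. if i \<in> S then w S else 0)
      | Y i j \<Rightarrow> (\<Sum>S\<in>Pow {1..N}. if i \<in> S \<and> j \<in> S then w S else 0))"

definition DD :: "(nat \<Rightarrow> real) \<Rightarrow> nat set \<Rightarrow> real" where
  "DD vhat S = 1 + (\<Sum>j\<in>S. vhat j)"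

lemma compact_vars: "lp_vars (compact_lp N K vhat r a c \<omega> eps) = cvars N"
  by (simp add: compact_lp_def cvars_def)

lemma compact_cons: "lp_cons (compact_lp N K vhat r a c \<omega> eps) = Res ` {1..K} \<union> cin N"
  by (auto simp: compact_lp_def cin_def)

lemma cvars_eq: "cvars N = insert X0 (X ` {1..N} \<union> (\<lambda>(i,j). Y i j) ` ({1..N} \<times> {1..N}))"
  by (auto simp: cvars_def)

lemma cin_eq: "cin N = insert Norm (Cap ` {1..N} \<union> (\<lambda>(i,j). YI i j) ` ({1..N} \<times> {1..N})
    \<union> (\<lambda>(i,j). YJ i j) ` ({1..N} \<times> {1..N}))"
  by (auto simp: cin_def)

lemma fin_cvars: "finite (cvars N)" by (simp add: cvars_eq)
lemma fin_cin: "finite (cin N)" by (simp add: cin_eq)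

lemma sum_delta1: "finite A \<Longrightarrow> (\<Sum>x\<in>A. (if x = a then 1 else 0) * (f x::real)) = (if a \<in> A then f a else 0)"
proof -
  assume "finite A"
  have "(\<Sum>x\<in>A. (if x = a then 1 else 0) * (f x::real)) = (\<Sum>x\<in>A. if x = a then f a else 0)"
    by (intro sum.cong) auto
  then show ?thesis using \<open>finite A\<close> by simp
qed

lemma sum_deltac: "finite A \<Longrightarrow> (\<Sum>x\<in>A. (if x = a then cc else 0) * (f x::real)) = (if a \<in> A then cc * f a else 0)"
proof -
  assume "finite A"
  have "(\<Sum>x\<in>A. (if x = a then cc else 0) * (f x::real)) = (\<Sum>x\<in>A. if x = a then cc * f a else 0)"
    by (intro sum.cong) auto
  then show ?thesis using \<open>finite A\<close> by simp
qed

lemma sum_cvars: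
  "(\<Sum>v\<in>cvars N. f v) = f X0 + (\<Sum>i\<in>{1..N}. f (X i)) + (\<Sum>i\<in>{1..N}. \<Sum>j\<in>{1..N}. f (Y i j))"
proof -
  have inj1: "inj_on X A" for A by (auto simp: inj_on_def)
  have inj2: "inj_on (\<lambda>(i,j). Y i j) A" for A by (auto simp: inj_on_def)
  have "(\<Sum>v\<in>cvars N. f v) = f X0 + (\<Sum>v\<in>X ` {1..N} \<union> (\<lambda>(i,j). Y i j) ` ({1..N} \<times> {1..N}). f v)"
    unfolding cvars_eq by (subst sum.insert) auto
  also have "(\<Sum>v\<in>X ` {1..N} \<union> (\<lambda>(i,j). Y i j) ` ({1..N} \<times> {1..N}). f v)
     = (\<Sum>v\<in>X ` {1..N}. f v) + (\<Sum>v\<in>(\<lambda>(i,j). Y i j) ` ({1..N} \<times> {1..N}). f v)"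
    by (rule sum.union_disjoint) auto
  also have "(\<Sum>v\<in>X ` {1..N}. f v) = (\<Sum>i\<in>{1..N}. f (X i))" by (simp add: sum.reindex[OF inj1])
  also have "(\<Sum>v\<in>(\<lambda>(i,j). Y i j) ` ({1..N} \<times> {1..N}). f v) = (\<Sum>i\<in>{1..N}. \<Sum>j\<in>{1..N}. f (Y i j))"
    by (subst sum.reindex[OF inj2]) (auto simp: sum.cartesian_product intro!: sum.cong)
  finally show ?thesis by (simp add: add.assoc)
qed

lemma sum_cin:
  "(\<Sum>v\<in>cin N. f v) = f Norm + (\<Sum>i\<in>{1..N}. f (Cap i)) + (\<Sum>i\<in>{1..N}. \<Sum>j\<in>{1..N}. f (YI i j))
     + (\<Sum>i\<in>{1..N}. \<Sum>j\<in>{1..N}. f (YJ i j))"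
proof -
  have inj1: "inj_on Cap A" for A by (auto simp: inj_on_def)
  have inj2: "inj_on (\<lambda>(i,j). YI i j) A" for A by (auto simp: inj_on_def)
  have inj3: "inj_on (\<lambda>(i,j). YJ i j) A" for A by (auto simp: inj_on_def)
  have "(\<Sum>v\<in>cin N. f v) = f Norm + (\<Sum>v\<in>Cap ` {1..N} \<union> (\<lambda>(i,j). YI i j) ` ({1..N} \<times> {1..N})
    \<union> (\<lambda>(i,j). YJ i j) ` ({1..N} \<times> {1..N}). f v)"
    unfolding cin_eq by (subst sum.insert) auto
  also have "(\<Sum>v\<in>Cap ` {1..N} \<union> (\<lambda>(i,j). YI i j) ` ({1..N} \<times> {1..N})
    \<union> (\<lambda>(i,j). YJ i j) ` ({1..N} \<times> {1..N}). f v) = (\<Sum>v\<in>Cap ` {1..N} \<union> (\<lambda>(i,j). YI i j) ` ({1..N} \<times> {1..N}). f v)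
     + (\<Sum>v\<in>(\<lambda>(i,j). YJ i j) ` ({1..N} \<times> {1..N}). f v)"
    by (rule sum.union_disjoint) auto
  also have "(\<Sum>v\<in>Cap ` {1..N} \<union> (\<lambda>(i,j). YI i j) ` ({1..N} \<times> {1..N}). f v)
     = (\<Sum>v\<in>Cap ` {1..N}. f v) + (\<Sum>v\<in>(\<lambda>(i,j). YI i j) ` ({1..N} \<times> {1..N}). f v)"
    by (rule sum.union_disjoint) auto
  also have "(\<Sum>v\<in>Cap ` {1..N}. f v) = (\<Sum>i\<in>{1..N}. f (Cap i))" by (simp add: sum.reindex[OF inj1])
  also have "(\<Sum>v\<in>(\<lambda>(i,j). YI i j) ` ({1..N} \<times> {1..N}). f v) = (\<Sum>i\<in>{1..N}. \<Sum>j\<in>{1..N}. f (YI i j))"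
    by (subst sum.reindex[OF inj2]) (auto simp: sum.cartesian_product intro!: sum.cong)
  also have "(\<Sum>v\<in>(\<lambda>(i,j). YJ i j) ` ({1..N} \<times> {1..N}). f v) = (\<Sum>i\<in>{1..N}. \<Sum>j\<in>{1..N}. f (YJ i j))"
    by (subst sum.reindex[OF inj3]) (auto simp: sum.cartesian_product intro!: sum.cong)
  finally show ?thesis by (simp add: add.assoc)
qed

lemma sum_ccons:
  "(\<Sum>v\<in>Res ` {1..K} \<union> cin N. f v) = (\<Sum>k\<in>{1..K}. f (Res k)) + (\<Sum>v\<in>cin N. f v)"
proof -
  have inj: "inj_on Res A" for A by (auto simp: inj_on_def)
  have "(\<Sum>v\<in>Res ` {1..K} \<union> cin N. f v) = (\<Sum>v\<in>Res ` {1..K}. f v) + (\<Sum>v\<in>cin N. f v)"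
    using fin_cin by (intro sum.union_disjoint) (auto simp: cin_def)
  then show ?thesis by (simp add: sum.reindex[OF inj])
qed

lemma row_obj: "(\<Sum>v\<in>cvars N. compact_obj vhat r eps v * z v) =
   (\<Sum>i\<in>{1..N}. r i * (vhat i + eps i) * z (X i)) + (\<Sum>i\<in>{1..N}. \<Sum>j\<in>{1..N}. r i * eps i * vhat j * z (Y i j))"
  by (simp add: sum_cvars)

lemma row_res: "(\<Sum>v\<in>cvars N. compact_mat vhat a eps (Res k) v * z v) =
   (\<Sum>i\<in>{1..N}. a i k * (vhat i - eps i) * z (X i)) + (\<Sum>i\<in>{1..N}. \<Sum>j\<in>{1..N}. - (a i k * eps i * vhat j) * z (Y i j))"
  by (simp add: sum_cvars)

lemma row_norm: "(\<Sum>v\<in>cvars N. compact_mat vhat a eps Norm v * z v) = z X0 + (\<Sum>i\<in>{1..N}. vhat i * z (X i))"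
  by (simp add: sum_cvars)

lemma row_cap: "i \<in> {1..N} \<Longrightarrow> (\<Sum>v\<in>cvars N. compact_mat vhat a eps (Cap i) v * z v) = z (X i) - z X0"
  by (simp add: sum_cvars sum_delta1)

lemma row_yi: "i \<in> {1..N} \<Longrightarrow> j \<in> {1..N} \<Longrightarrow>
    (\<Sum>v\<in>cvars N. compact_mat vhat a eps (YI i j) v * z v) = z (Y i j) - z (X i)"
proof -
  assume ij: "i \<in> {1..N}" "j \<in> {1..N}"
  have "(\<Sum>i'\<in>{1..N}. \<Sum>j'\<in>{1..N}. compact_mat vhat a eps (YI i j) (Y i' j') * z (Y i' j'))
      = (\<Sum>i'\<in>{1..N}. if i' = i then (\<Sum>j'\<in>{1..N}. if j' = j then z (Y i' j') else 0) else 0)"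
    by (intro sum.cong refl) (auto simp: sum_delta1)
  also have "\<dots> = z (Y i j)" using ij by (simp add: sum_delta1)
  finally show ?thesis using ij by (simp add: sum_cvars sum_delta1 sum_deltac)
qed

lemma row_yj: "i \<in> {1..N} \<Longrightarrow> j \<in> {1..N} \<Longrightarrow>
    (\<Sum>v\<in>cvars N. compact_mat vhat a eps (YJ i j) v * z v) = z (Y i j) - z (X j)"
proof -
  assume ij: "i \<in> {1..N}" "j \<in> {1..N}"
  have "(\<Sum>i'\<in>{1..N}. \<Sum>j'\<in>{1..N}. compact_mat vhat a eps (YJ i j) (Y i' j') * z (Y i' j'))
      = (\<Sum>i'\<in>{1..N}. if i' = i then (\<Sum>j'\<in>{1..N}. if j' = j then z (Y i' j') else 0) else 0)"
    by (intro sum.cong refl) (auto simp: sum_delta1)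
  also have "\<dots> = z (Y i j)" using ij by (simp add: sum_delta1)
  finally show ?thesis using ij by (simp add: sum_cvars sum_delta1 sum_deltac)
qed

lemma DD_pos: "finite S \<Longrightarrow> \<forall>i\<in>S. 0 < vhat i \<Longrightarrow> 0 < DD vhat S"
  unfolding DD_def by (smt (verit) sum_nonneg)

lemma mnl_DD: "mnl_prob vhat S i = vhat i / DD vhat S"
  by (simp add: mnl_prob_def DD_def)

lemma DD_expand: "finite S \<Longrightarrow> cc * DD vhat S = cc + (\<Sum>j\<in>S. cc * vhat j)"
  by (simp add: DD_def algebra_simps sum_distrib_left)

lemma DR:
  assumes "finite S" "\<forall>i\<in>S. 0 < vhat i"
  shows "DD vhat S * (\<Sum>i\<in>S. r i * (mnl_prob vhat S i + eps i))
      = (\<Sum>i\<in>S. r i * (vhat i + eps i)) + (\<Sum>i\<in>S. \<Sum>j\<in>S. r i * eps i * vhat j)"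
proof -
  have D: "DD vhat S \<noteq> 0" using DD_pos[OF assms] by simp
  have "DD vhat S * (\<Sum>i\<in>S. r i * (mnl_prob vhat S i + eps i))
      = (\<Sum>i\<in>S. r i * vhat i + (r i * eps i) * DD vhat S)"
    unfolding sum_distrib_left by (intro sum.cong refl) (simp add: mnl_DD D field_simps)
  also have "\<dots> = (\<Sum>i\<in>S. r i * (vhat i + eps i) + (\<Sum>j\<in>S. r i * eps i * vhat j))"
    by (intro sum.cong refl, subst DD_expand[OF assms(1)]) (simp add: algebra_simps)
  finally show ?thesis by (simp add: sum.distrib)
qed

lemma DA:
  assumes "finite S" "\<forall>i\<in>S. 0 < vhat i"
  shows "DD vhat S * (\<Sum>i\<in>S. a i k * (mnl_prob vhat S i - eps i))
      = (\<Sum>i\<in>S. a i k * (vhat i - eps i)) + (\<Sum>i\<in>S. \<Sum>j\<in>S. - (a i k * eps i * vhat j))"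
proof -
  have D: "DD vhat S \<noteq> 0" using DD_pos[OF assms] by simp
  have "DD vhat S * (\<Sum>i\<in>S. a i k * (mnl_prob vhat S i - eps i))
      = (\<Sum>i\<in>S. a i k * vhat i - (a i k * eps i) * DD vhat S)"
    unfolding sum_distrib_left by (intro sum.cong refl) (simp add: mnl_DD D field_simps)
  also have "\<dots> = (\<Sum>i\<in>S. a i k * (vhat i - eps i) + (\<Sum>j\<in>S. - (a i k * eps i * vhat j)))"
    by (intro sum.cong refl, subst DD_expand[OF assms(1)]) (simp add: algebra_simps sum_negf)
  finally show ?thesis by (simp add: sum.distrib)
qed

lemma zof_X0: "zof N w X0 = (\<Sum>S\<in>Pow {1..N}. w S)" by (simp add: zof_def)
lemma zof_X: "zof N w (X i) = (\<Sum>S\<in>Pow {1..N}. if i \<in> S then w S else 0)" by (simp add: zof_def)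
lemma zof_Y: "zof N w (Y i j) = (\<Sum>S\<in>Pow {1..N}. if i \<in> S \<and> j \<in> S then w S else 0)" by (simp add: zof_def)

lemma zof_obj:
  assumes "\<forall>i\<in>{1..N}. 0 < vhat i"
  shows "(\<Sum>v\<in>cvars N. compact_obj vhat r eps v * zof N w v)
     = (\<Sum>S\<in>Pow {1..N}. w S * (DD vhat S * (\<Sum>i\<in>S. r i * (mnl_prob vhat S i + eps i))))"
proof -
  have "(\<Sum>v\<in>cvars N. compact_obj vhat r eps v * zof N w v)
     = (\<Sum>i\<in>{1..N}. (r i * (vhat i + eps i)) * (\<Sum>S\<in>Pow {1..N}. if i \<in> S then w S else 0))
       + (\<Sum>i\<in>{1..N}. \<Sum>j\<in>{1..N}. (r i * eps i * vhat j) * (\<Sum>S\<in>Pow {1..N}. if i \<in> S \<and> j \<in> S then w S else 0))"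
    by (simp add: row_obj zof_X zof_Y)
  also have "\<dots> = (\<Sum>S\<in>Pow {1..N}. w S * (\<Sum>i\<in>S. r i * (vhat i + eps i)))
       + (\<Sum>S\<in>Pow {1..N}. w S * (\<Sum>i\<in>S. \<Sum>j\<in>S. r i * eps i * vhat j))"
    by (simp only: lin1[of "{1..N}" "\<lambda>i. r i * (vhat i + eps i)"] lin2[of "{1..N}" "\<lambda>i j. r i * eps i * vhat j"] finite_atLeastAtMost)
  also have "\<dots> = (\<Sum>S\<in>Pow {1..N}. w S * (DD vhat S * (\<Sum>i\<in>S. r i * (mnl_prob vhat S i + eps i))))"
    unfolding sum.distrib[symmetric]
  proof (intro sum.cong refl)
    fix S assume "S \<in> Pow {1..N}"
    then have f: "finite S" and p: "\<forall>i\<in>S. 0 < vhat i" using assms finite_subset by auto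
    show "w S * (\<Sum>i\<in>S. r i * (vhat i + eps i)) + w S * (\<Sum>i\<in>S. \<Sum>j\<in>S. r i * eps i * vhat j)
        = w S * (DD vhat S * (\<Sum>i\<in>S. r i * (mnl_prob vhat S i + eps i)))"
      by (subst DR[OF f p]) (rule distrib_left[symmetric])
  qed
  finally show ?thesis .
qed

lemma zof_res:
  assumes "\<forall>i\<in>{1..N}. 0 < vhat i"
  shows "(\<Sum>v\<in>cvars N. compact_mat vhat a eps (Res k) v * zof N w v)
     = (\<Sum>S\<in>Pow {1..N}. w S * (DD vhat S * (\<Sum>i\<in>S. a i k * (mnl_prob vhat S i - eps i))))"
proof -
  have "(\<Sum>v\<in>cvars N. compact_mat vhat a eps (Res k) v * zof N w v)
     = (\<Sum>i\<in>{1..N}. (a i k * (vhat i - eps i)) * (\<Sum>S\<in>Pow {1..N}. if i \<in> S then w S else 0))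
       + (\<Sum>i\<in>{1..N}. \<Sum>j\<in>{1..N}. (- (a i k * eps i * vhat j)) * (\<Sum>S\<in>Pow {1..N}. if i \<in> S \<and> j \<in> S then w S else 0))"
    by (simp only: row_res zof_X zof_Y)
  also have "\<dots> = (\<Sum>S\<in>Pow {1..N}. w S * (\<Sum>i\<in>S. a i k * (vhat i - eps i)))
       + (\<Sum>S\<in>Pow {1..N}. w S * (\<Sum>i\<in>S. \<Sum>j\<in>S. - (a i k * eps i * vhat j)))"
    by (simp only: lin1[of "{1..N}" "\<lambda>i. a i k * (vhat i - eps i)"] lin2[of "{1..N}" "\<lambda>i j. - (a i k * eps i * vhat j)"] finite_atLeastAtMost)
  also have "\<dots> = (\<Sum>S\<in>Pow {1..N}. w S * (DD vhat S * (\<Sum>i\<in>S. a i k * (mnl_prob vhat S i - eps i))))"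
    unfolding sum.distrib[symmetric]
  proof (intro sum.cong refl)
    fix S assume "S \<in> Pow {1..N}"
    then have f: "finite S" and p: "\<forall>i\<in>S. 0 < vhat i" using assms finite_subset by auto
    show "w S * (\<Sum>i\<in>S. a i k * (vhat i - eps i)) + w S * (\<Sum>i\<in>S. \<Sum>j\<in>S. - (a i k * eps i * vhat j))
        = w S * (DD vhat S * (\<Sum>i\<in>S. a i k * (mnl_prob vhat S i - eps i)))"
      by (subst DA[OF f p]) (rule distrib_left[symmetric])
  qed
  finally show ?thesis .
qed

lemma zof_norm:
  "(\<Sum>v\<in>cvars N. compact_mat vhat a eps Norm v * zof N w v) = (\<Sum>S\<in>Pow {1..N}. w S * DD vhat S)"
proof -
  have "(\<Sum>v\<in>cvars N. compact_mat vhat a eps Norm v * zof N w v)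
     = (\<Sum>S\<in>Pow {1..N}. w S) + (\<Sum>i\<in>{1..N}. vhat i * (\<Sum>S\<in>Pow {1..N}. if i \<in> S then w S else 0))"
    by (simp only: row_norm zof_X zof_X0)
  also have "\<dots> = (\<Sum>S\<in>Pow {1..N}. w S) + (\<Sum>S\<in>Pow {1..N}. w S * (\<Sum>i\<in>S. vhat i))"
    by (simp only: lin1[of "{1..N}" vhat] finite_atLeastAtMost)
  also have "\<dots> = (\<Sum>S\<in>Pow {1..N}. w S * DD vhat S)"
    by (simp add: DD_def distrib_left sum.distrib)
  finally show ?thesis .
qed

lemma zof_nonneg: "\<forall>S. 0 \<le> w S \<Longrightarrow> 0 \<le> zof N w v"
  by (cases v) (auto simp: zof_def intro!: sum_nonneg)

lemma zof_cap: "\<forall>S. 0 \<le> w S \<Longrightarrow> zof N w (X i) \<le> zof N w X0"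
  unfolding zof_X zof_X0 by (intro sum_mono) auto

lemma zof_yi: "\<forall>S. 0 \<le> w S \<Longrightarrow> zof N w (Y i j) \<le> zof N w (X i)"
  unfolding zof_X zof_Y by (intro sum_mono) auto

lemma zof_yj: "\<forall>S. 0 \<le> w S \<Longrightarrow> zof N w (Y i j) \<le> zof N w (X j)"
  unfolding zof_X zof_Y by (intro sum_mono) auto

lemma struct_decomp:
  assumes nn: "\<forall>i\<in>{1..N}. 0 \<le> z (X i)"
    and norm: "z X0 + (\<Sum>i\<in>{1..N}. vhat i * z (X i)) = 1"
    and cap: "\<forall>i\<in>{1..N}. z (X i) \<le> z X0"
    and yi: "\<forall>i\<in>{1..N}. \<forall>j\<in>{1..N}. z (Y i j) \<le> z (X i)"
    and yj: "\<forall>i\<in>{1..N}. \<forall>j\<in>{1..N}. z (Y i j) \<le> z (X j)"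
  shows "\<exists>w. (\<forall>S. 0 \<le> w S) \<and> zof N w X0 = z X0 \<and> (\<forall>i\<in>{1..N}. zof N w (X i) = z (X i))
     \<and> (\<forall>i\<in>{1..N}. \<forall>j\<in>{1..N}. z (Y i j) \<le> zof N w (Y i j))"
proof -
  have x00: "0 \<le> z X0"
  proof (cases "N = 0")
    case True then show ?thesis using norm by simp
  next
    case False then have "1 \<in> {1..N}" by simp
    then show ?thesis using nn cap by force
  qed
  have "\<forall>i\<in>{1..N}. 0 \<le> z (X i) \<and> z (X i) \<le> z X0" using nn cap by blast
  from decomposition[OF finite_atLeastAtMost x00 this] obtain w where
    w0: "\<forall>S. 0 \<le> w S" and w1: "z X0 = (\<Sum>S\<in>Pow {1..N}. w S)"
    and w2: "\<forall>i\<in>{1..N}. z (X i) = (\<Sum>S\<in>Pow {1..N}. if i \<in> S then w S else 0)"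
    and w3: "\<forall>i\<in>{1..N}. \<forall>j\<in>{1..N}. min (z (X i)) (z (X j)) = (\<Sum>S\<in>Pow {1..N}. if i \<in> S \<and> j \<in> S then w S else 0)"
    by blast
  show ?thesis
  proof (intro exI[of _ w] conjI ballI)
    show "\<forall>S. 0 \<le> w S" by (rule w0)
    show "zof N w X0 = z X0" using w1 by (simp add: zof_X0)
    show "zof N w (X i) = z (X i)" if "i \<in> {1..N}" for i using w2 that by (simp add: zof_X)
    show "z (Y i j) \<le> zof N w (Y i j)" if "i \<in> {1..N}" "j \<in> {1..N}" for i j
    proof -
      have "z (Y i j) \<le> min (z (X i)) (z (X j))" using yi yj that by simp
      moreover have "min (z (X i)) (z (X j)) = zof N w (Y i j)" using w3 that by (simp add: zof_Y)
      ultimately show ?thesis by simp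
    qed
  qed
qed

lemma cmp_rows:
  assumes "z X0 = z' X0" "\<forall>i\<in>{1..N}. z (X i) = z' (X i)"
    "\<forall>i\<in>{1..N}. \<forall>j\<in>{1..N}. f (Y i j) * z (Y i j) \<le> f (Y i j) * z' (Y i j)"
  shows "(\<Sum>v\<in>cvars N. f v * z v) \<le> (\<Sum>v\<in>cvars N. f v * (z' v :: real))"
proof -
  have e: "(\<Sum>i\<in>{1..N}. f (X i) * z (X i)) = (\<Sum>i\<in>{1..N}. f (X i) * z' (X i))"
    using assms(2) by (intro sum.cong) auto
  have m: "(\<Sum>i\<in>{1..N}. \<Sum>j\<in>{1..N}. f (Y i j) * z (Y i j)) \<le> (\<Sum>i\<in>{1..N}. \<Sum>j\<in>{1..N}. f (Y i j) * z' (Y i j))"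
    using assms(3) by (intro sum_mono) auto
  show ?thesis unfolding sum_cvars using e m assms(1) by simp
qed

lemma sum_ucons: "(\<Sum>c\<in>insert None (Some ` {1..K::nat}). f c) = f None + (\<Sum>k\<in>{1..K}. f (Some k))"
  by (rule sum_option_W) simp

lemma cin_cases:
  assumes "c \<in> cin N"
  obtains "c = Norm" | i where "i \<in> {1..N}" "c = Cap i"
    | i j where "i \<in> {1..N}" "j \<in> {1..N}" "c = YI i j"
    | i j where "i \<in> {1..N}" "j \<in> {1..N}" "c = YJ i j"
  using assms unfolding cin_def by blast

lemma ucb_simps:
  "lp_vars (ucb_lp N K vhat r a c \<omega> eps) = Pow {1..N}"
  "lp_cons (ucb_lp N K vhat r a c \<omega> eps) = insert None (Some ` {1..K})"
  "lp_eqs (ucb_lp N K vhat r a c \<omega> eps) = {None}"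
  "lp_free (ucb_lp N K vhat r a c \<omega> eps) = {}"
  "lp_obj (ucb_lp N K vhat r a c \<omega> eps) = (\<lambda>S. \<Sum>i\<in>S. r i * (mnl_prob vhat S i + eps i))"
  "lp_mat (ucb_lp N K vhat r a c \<omega> eps) None S = 1"
  "lp_mat (ucb_lp N K vhat r a c \<omega> eps) (Some k) S = (\<Sum>i\<in>S. a i k * (mnl_prob vhat S i - eps i))"
  "lp_rhs (ucb_lp N K vhat r a c \<omega> eps) None = 1"
  "lp_rhs (ucb_lp N K vhat r a c \<omega> eps) (Some k) = (1 - \<omega>) * c k"
  by (simp_all add: ucb_lp_def)

lemma compact_simps:
  "lp_vars (compact_lp N K vhat r a c \<omega> eps) = cvars N"
  "lp_cons (compact_lp N K vhat r a c \<omega> eps) = Res ` {1..K} \<union> cin N"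
  "lp_eqs (compact_lp N K vhat r a c \<omega> eps) = {Norm}"
  "lp_free (compact_lp N K vhat r a c \<omega> eps) = {X0}"
  "lp_obj (compact_lp N K vhat r a c \<omega> eps) = compact_obj vhat r eps"
  "lp_mat (compact_lp N K vhat r a c \<omega> eps) = compact_mat vhat a eps"
  "lp_rhs (compact_lp N K vhat r a c \<omega> eps) = compact_rhs K c \<omega>"
  by (rule compact_vars, rule compact_cons, (simp add: compact_lp_def)+)

lemma Res_notin_cin: "Res k \<notin> cin N" by (auto simp: cin_def)

lemma weak_piece:
  fixes P :: "('v, 'c) lp"
  assumes du: "lp_dual_feasible P u" and nz: "\<forall>v\<in>lp_vars P - lp_free P. 0 \<le> z v"
  shows "lp_objective P z \<le> (\<Sum>cc\<in>lp_cons P. u cc * (\<Sum>v\<in>lp_vars P. lp_mat P cc v * z v))"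
proof -
  have "lp_objective P z = (\<Sum>v\<in>lp_vars P. lp_obj P v * z v)" by (simp add: lp_objective_def)
  also have "\<dots> \<le> (\<Sum>v\<in>lp_vars P. (\<Sum>cc\<in>lp_cons P. lp_mat P cc v * u cc) * z v)"
  proof (rule sum_mono)
    fix v assume v: "v \<in> lp_vars P"
    show "lp_obj P v * z v \<le> (\<Sum>cc\<in>lp_cons P. lp_mat P cc v * u cc) * z v"
    proof (cases "v \<in> lp_free P")
      case True
      then have "(\<Sum>cc\<in>lp_cons P. lp_mat P cc v * u cc) = lp_obj P v"
        using du v by (simp add: lp_dual_feasible_def)
      then show ?thesis by simp
    next
      case False
      then have "lp_obj P v \<le> (\<Sum>cc\<in>lp_cons P. lp_mat P cc v * u cc)"
        using du v by (simp add: lp_dual_feasible_def)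
      moreover have "0 \<le> z v" using nz v False by blast
      ultimately show ?thesis by (rule mult_right_mono)
    qed
  qed
  also have "\<dots> = (\<Sum>v\<in>lp_vars P. \<Sum>cc\<in>lp_cons P. u cc * (lp_mat P cc v * z v))"
    by (intro sum.cong refl) (simp add: sum_distrib_left sum_distrib_right ac_simps)
  also have "\<dots> = (\<Sum>cc\<in>lp_cons P. \<Sum>v\<in>lp_vars P. u cc * (lp_mat P cc v * z v))"
    by (rule sum.swap)
  also have "\<dots> = (\<Sum>cc\<in>lp_cons P. u cc * (\<Sum>v\<in>lp_vars P. lp_mat P cc v * z v))"
    by (simp add: sum_distrib_left)
  finally show ?thesis .
qed

lemma cin_struct:
  assumes nn: "\<forall>v\<in>cvars N - {X0}. 0 \<le> z v"
   and rows: "\<forall>cc\<in>cin N. if cc \<in> {Norm} then (\<Sum>v\<in>cvars N. compact_mat vhat a eps cc v * z v) = compact_rhs K c \<omega> cc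
          else (\<Sum>v\<in>cvars N. compact_mat vhat a eps cc v * z v) \<le> compact_rhs K c \<omega> cc"
  shows "\<forall>i\<in>{1..N}. 0 \<le> z (X i)"
    and "z X0 + (\<Sum>i\<in>{1..N}. vhat i * z (X i)) = 1"
    and "\<forall>i\<in>{1..N}. z (X i) \<le> z X0"
    and "\<forall>i\<in>{1..N}. \<forall>j\<in>{1..N}. z (Y i j) \<le> z (X i)"
    and "\<forall>i\<in>{1..N}. \<forall>j\<in>{1..N}. z (Y i j) \<le> z (X j)"
proof -
  have rowle: "(\<Sum>v\<in>cvars N. compact_mat vhat a eps cc v * z v) \<le> compact_rhs K c \<omega> cc"
    if "cc \<in> cin N" "cc \<noteq> Norm" for cc
  proof -
    have "if cc \<in> {Norm} then (\<Sum>v\<in>cvars N. compact_mat vhat a eps cc v * z v) = compact_rhs K c \<omega> cc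
          else (\<Sum>v\<in>cvars N. compact_mat vhat a eps cc v * z v) \<le> compact_rhs K c \<omega> cc"
      using rows that(1) by blast
    then show ?thesis using that(2) by simp
  qed
  show "\<forall>i\<in>{1..N}. 0 \<le> z (X i)" using nn by (auto simp: cvars_def)
  have "Norm \<in> cin N" by (simp add: cin_def)
  then have "(\<Sum>v\<in>cvars N. compact_mat vhat a eps Norm v * z v) = 1" using rows by (metis compact_rhs.simps(2) insertI1)
  then show "z X0 + (\<Sum>i\<in>{1..N}. vhat i * z (X i)) = 1" by (simp add: row_norm)
  show "\<forall>i\<in>{1..N}. z (X i) \<le> z X0"
  proof
    fix i assume i: "i \<in> {1..N}"
    then have "Cap i \<in> cin N" by (simp add: cin_def)
    then show "z (X i) \<le> z X0" using rowle[of "Cap i"] row_cap[OF i] by simp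
  qed
  show "\<forall>i\<in>{1..N}. \<forall>j\<in>{1..N}. z (Y i j) \<le> z (X i)"
  proof (intro ballI)
    fix i j assume i: "i \<in> {1..N}" and j: "j \<in> {1..N}"
    then have "YI i j \<in> cin N" by (auto simp: cin_def)
    then show "z (Y i j) \<le> z (X i)" using rowle[of "YI i j"] row_yi[OF i j] by simp
  qed
  show "\<forall>i\<in>{1..N}. \<forall>j\<in>{1..N}. z (Y i j) \<le> z (X j)"
  proof (intro ballI)
    fix i j assume i: "i \<in> {1..N}" and j: "j \<in> {1..N}"
    then have "YJ i j \<in> cin N" by (auto simp: cin_def)
    then show "z (Y i j) \<le> z (X j)" using rowle[of "YJ i j"] row_yj[OF i j] by simp
  qed
qed

lemma sum_delta_r: "finite A \<Longrightarrow> (\<Sum>x\<in>A. (f x::real) * (if x = a then 1 else 0)) = (if a \<in> A then f a else 0)"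
proof -
  assume "finite A"
  have "(\<Sum>x\<in>A. (f x::real) * (if x = a then 1 else 0)) = (\<Sum>x\<in>A. if x = a then f a else 0)"
    by (intro sum.cong) auto
  then show ?thesis using \<open>finite A\<close> by simp
qed

context
  fixes N K :: nat and vhat r :: "nat \<Rightarrow> real" and a :: "nat \<Rightarrow> nat \<Rightarrow> real"
    and c :: "nat \<Rightarrow> real" and \<omega> :: real and eps :: "nat \<Rightarrow> real"
  assumes vpos: "\<forall>i\<in>{1..N}. 0 < vhat i"
    and rnn: "\<forall>i\<in>{1..N}. 0 \<le> r i"
    and ann: "\<forall>i\<in>{1..N}. \<forall>k\<in>{1..K}. 0 \<le> a i k"
    and epsnn: "\<forall>i. 0 \<le> eps i"
begin

abbreviation "UU \<equiv> ucb_lp N K vhat r a c \<omega> eps"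
abbreviation "CC \<equiv> compact_lp N K vhat r a c \<omega> eps"
abbreviation "RS S \<equiv> (\<Sum>i\<in>S. r i * (mnl_prob vhat S i + eps i))"
abbreviation "AS k S \<equiv> (\<Sum>i\<in>S. a i k * (mnl_prob vhat S i - eps i))"

lemma DDp: "S \<in> Pow {1..N} \<Longrightarrow> 0 < DD vhat S"
  using vpos by (intro DD_pos) (auto intro: finite_subset)

lemma U_to_C:
  assumes fy: "lp_feasible UU y"
  shows "\<exists>z. lp_feasible CC z \<and> lp_objective CC z = lp_objective UU y"
proof -
  have y0: "\<forall>S\<in>Pow {1..N}. 0 \<le> y S" using fy by (simp add: lp_feasible_def ucb_simps)
  have ynorm: "(\<Sum>S\<in>Pow {1..N}. y S) = 1"
    using fy by (simp add: lp_feasible_def ucb_simps)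
  have yres: "(\<Sum>S\<in>Pow {1..N}. AS k S * y S) \<le> (1 - \<omega>) * c k" if "k \<in> {1..K}" for k
    using fy that by (simp add: lp_feasible_def ucb_simps)
  define w where "w S = (if S \<in> Pow {1..N} then y S / DD vhat S else 0)" for S
  have w0: "\<forall>S. 0 \<le> w S" using y0 DDp by (auto simp: w_def intro!: divide_nonneg_pos)
  have wD: "w S * DD vhat S = y S" if "S \<in> Pow {1..N}" for S
    using DDp[OF that] that by (simp add: w_def)
  have sw: "(\<Sum>S\<in>Pow {1..N}. w S * (DD vhat S * f S)) = (\<Sum>S\<in>Pow {1..N}. f S * y S)" for f
  proof (intro sum.cong refl)
    fix S assume S: "S \<in> Pow {1..N}"
    have "w S * (DD vhat S * f S) = (w S * DD vhat S) * f S" by (rule mult.assoc[symmetric])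
    also have "\<dots> = f S * y S" by (simp only: wD[OF S] mult.commute)
    finally show "w S * (DD vhat S * f S) = f S * y S" .
  qed
  define z where "z = zof N w"
  have "lp_feasible CC z"
    unfolding lp_feasible_def compact_simps
  proof (intro conjI ballI)
    fix v assume "v \<in> cvars N - {X0}"
    then show "0 \<le> z v" using zof_nonneg[OF w0] by (simp add: z_def)
  next
    fix cc assume cc: "cc \<in> Res ` {1..K} \<union> cin N"
    show "if cc \<in> {Norm} then (\<Sum>v\<in>cvars N. compact_mat vhat a eps cc v * z v) = compact_rhs K c \<omega> cc
          else (\<Sum>v\<in>cvars N. compact_mat vhat a eps cc v * z v) \<le> compact_rhs K c \<omega> cc"
    proof (cases "cc \<in> cin N")
      case False
      then obtain k where k: "k \<in> {1..K}" "cc = Res k" using cc by blast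
      have "(\<Sum>v\<in>cvars N. compact_mat vhat a eps (Res k) v * z v) = (\<Sum>S\<in>Pow {1..N}. AS k S * y S)"
        unfolding z_def zof_res[OF vpos] by (rule sw)
      then show ?thesis using k yres[OF k(1)] by simp
    next
      case True
      then show ?thesis
      proof (cases rule: cin_cases)
        case 1
        have "(\<Sum>v\<in>cvars N. compact_mat vhat a eps Norm v * z v) = 1"
          unfolding z_def zof_norm using sw[of "\<lambda>_. 1"] ynorm by simp
        then show ?thesis using 1 by simp
      next
        case (2 i)
        then show ?thesis using zof_cap[OF w0, of N i] by (simp add: row_cap z_def)
      next
        case (3 i j)
        then show ?thesis using zof_yi[OF w0, of N i j] by (simp add: row_yi z_def)
      next
        case (4 i j)
        then show ?thesis using zof_yj[OF w0, of N i j] by (simp add: row_yj z_def)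
      qed
    qed
  qed
  moreover have "lp_objective CC z = lp_objective UU y"
    unfolding lp_objective_def compact_simps ucb_simps z_def zof_obj[OF vpos] by (rule sw)
  ultimately show ?thesis by blast
qed

lemma C_struct:
  assumes fz: "lp_feasible CC z"
  shows "\<forall>i\<in>{1..N}. 0 \<le> z (X i)"
    and "z X0 + (\<Sum>i\<in>{1..N}. vhat i * z (X i)) = 1"
    and "\<forall>i\<in>{1..N}. z (X i) \<le> z X0"
    and "\<forall>i\<in>{1..N}. \<forall>j\<in>{1..N}. z (Y i j) \<le> z (X i)"
    and "\<forall>i\<in>{1..N}. \<forall>j\<in>{1..N}. z (Y i j) \<le> z (X j)"
    and "\<forall>k\<in>{1..K}. (\<Sum>v\<in>cvars N. compact_mat vhat a eps (Res k) v * z v) \<le> (1 - \<omega>) * c k"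
proof -
  have nn: "\<forall>v\<in>cvars N - {X0}. 0 \<le> z v"
   and rows: "\<forall>cc\<in>Res ` {1..K} \<union> cin N. if cc \<in> {Norm} then (\<Sum>v\<in>cvars N. compact_mat vhat a eps cc v * z v) = compact_rhs K c \<omega> cc
          else (\<Sum>v\<in>cvars N. compact_mat vhat a eps cc v * z v) \<le> compact_rhs K c \<omega> cc"
    using fz unfolding lp_feasible_def compact_simps by blast+
  have rowle: "(\<Sum>v\<in>cvars N. compact_mat vhat a eps cc v * z v) \<le> compact_rhs K c \<omega> cc"
    if "cc \<in> Res ` {1..K} \<union> cin N" "cc \<noteq> Norm" for cc
  proof -
    have "if cc \<in> {Norm} then (\<Sum>v\<in>cvars N. compact_mat vhat a eps cc v * z v) = compact_rhs K c \<omega> cc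
          else (\<Sum>v\<in>cvars N. compact_mat vhat a eps cc v * z v) \<le> compact_rhs K c \<omega> cc"
      using rows that(1) by blast
    then show ?thesis using that(2) by simp
  qed
  show "\<forall>i\<in>{1..N}. 0 \<le> z (X i)" using nn by (auto simp: cvars_def)
  have "Norm \<in> cin N" by (simp add: cin_def)
  then have "(\<Sum>v\<in>cvars N. compact_mat vhat a eps Norm v * z v) = 1" using rows by (metis UnI2 compact_rhs.simps(2) insertI1)
  then show "z X0 + (\<Sum>i\<in>{1..N}. vhat i * z (X i)) = 1" by (simp add: row_norm)
  show "\<forall>i\<in>{1..N}. z (X i) \<le> z X0"
  proof
    fix i assume i: "i \<in> {1..N}"
    then have "Cap i \<in> cin N" by (simp add: cin_def)
    then show "z (X i) \<le> z X0" using rowle[of "Cap i"] row_cap[OF i] by simp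
  qed
  show "\<forall>i\<in>{1..N}. \<forall>j\<in>{1..N}. z (Y i j) \<le> z (X i)"
  proof (intro ballI)
    fix i j assume i: "i \<in> {1..N}" and j: "j \<in> {1..N}"
    then have "YI i j \<in> cin N" by (auto simp: cin_def)
    then show "z (Y i j) \<le> z (X i)" using rowle[of "YI i j"] row_yi[OF i j] by simp
  qed
  show "\<forall>i\<in>{1..N}. \<forall>j\<in>{1..N}. z (Y i j) \<le> z (X j)"
  proof (intro ballI)
    fix i j assume i: "i \<in> {1..N}" and j: "j \<in> {1..N}"
    then have "YJ i j \<in> cin N" by (auto simp: cin_def)
    then show "z (Y i j) \<le> z (X j)" using rowle[of "YJ i j"] row_yj[OF i j] by simp
  qed
  show "\<forall>k\<in>{1..K}. (\<Sum>v\<in>cvars N. compact_mat vhat a eps (Res k) v * z v) \<le> (1 - \<omega>) * c k"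
  proof
    fix k assume k: "k \<in> {1..K}"
    then have "Res k \<in> Res ` {1..K} \<union> cin N" by blast
    from rowle[OF this] show "(\<Sum>v\<in>cvars N. compact_mat vhat a eps (Res k) v * z v) \<le> (1 - \<omega>) * c k" by simp
  qed
qed

lemma obj_mono:
  assumes "z X0 = z' X0" "\<forall>i\<in>{1..N}. z (X i) = z' (X i)" "\<forall>i\<in>{1..N}. \<forall>j\<in>{1..N}. z (Y i j) \<le> z' (Y i j)"
  shows "(\<Sum>v\<in>cvars N. compact_obj vhat r eps v * z v) \<le> (\<Sum>v\<in>cvars N. compact_obj vhat r eps v * z' v)"
  using assms(1,2)
proof (rule cmp_rows)
  show "\<forall>i\<in>{1..N}. \<forall>j\<in>{1..N}. compact_obj vhat r eps (Y i j) * z (Y i j) \<le> compact_obj vhat r eps (Y i j) * z' (Y i j)"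
    using assms(3) rnn epsnn vpos by (auto intro!: mult_left_mono simp del: mult_le_cancel_left)
qed

lemma res_mono:
  assumes "z X0 = z' X0" "\<forall>i\<in>{1..N}. z (X i) = z' (X i)" "\<forall>i\<in>{1..N}. \<forall>j\<in>{1..N}. z (Y i j) \<le> z' (Y i j)"
    and k: "k \<in> {1..K}"
  shows "(\<Sum>v\<in>cvars N. compact_mat vhat a eps (Res k) v * z' v) \<le> (\<Sum>v\<in>cvars N. compact_mat vhat a eps (Res k) v * z v)"
proof (rule cmp_rows)
  show "z' X0 = z X0" "\<forall>i\<in>{1..N}. z' (X i) = z (X i)" using assms(1,2) by auto
  show "\<forall>i\<in>{1..N}. \<forall>j\<in>{1..N}. compact_mat vhat a eps (Res k) (Y i j) * z' (Y i j) \<le> compact_mat vhat a eps (Res k) (Y i j) * z (Y i j)"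
  proof (intro ballI)
    fix i j assume i: "i \<in> {1..N}" and j: "j \<in> {1..N}"
    have "0 \<le> a i k * eps i * vhat j" using ann epsnn vpos i j k by (simp add: less_imp_le)
    then show "compact_mat vhat a eps (Res k) (Y i j) * z' (Y i j) \<le> compact_mat vhat a eps (Res k) (Y i j) * z (Y i j)"
      using assms(3) i j by (simp add: mult_left_mono)
  qed
qed

lemma C_to_U:
  assumes fz: "lp_feasible CC z"
  shows "\<exists>y. lp_feasible UU y \<and> lp_objective CC z \<le> lp_objective UU y"
proof -
  note st = C_struct[OF fz]
  from struct_decomp[OF st(1) st(2) st(3) st(4) st(5)] obtain w where w0: "\<forall>S. 0 \<le> w S"
    and e0: "zof N w X0 = z X0" and eX: "\<forall>i\<in>{1..N}. zof N w (X i) = z (X i)"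
    and eY: "\<forall>i\<in>{1..N}. \<forall>j\<in>{1..N}. z (Y i j) \<le> zof N w (Y i j)" by blast
  define y where "y S = w S * DD vhat S" for S
  have sw: "(\<Sum>S\<in>Pow {1..N}. w S * (DD vhat S * f S)) = (\<Sum>S\<in>Pow {1..N}. f S * y S)" for f
    by (intro sum.cong refl) (simp add: y_def ac_simps)
  have e0': "z X0 = zof N w X0" and eX': "\<forall>i\<in>{1..N}. z (X i) = zof N w (X i)" using e0 eX by auto
  have norm': "(\<Sum>S\<in>Pow {1..N}. y S) = 1"
  proof -
    have "(\<Sum>S\<in>Pow {1..N}. y S) = (\<Sum>v\<in>cvars N. compact_mat vhat a eps Norm v * zof N w v)"
      by (simp add: zof_norm y_def)
    also have "\<dots> = zof N w X0 + (\<Sum>i\<in>{1..N}. vhat i * zof N w (X i))" by (rule row_norm)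
    also have "\<dots> = z X0 + (\<Sum>i\<in>{1..N}. vhat i * z (X i))" using e0 eX by simp
    also have "\<dots> = 1" by (rule st(2))
    finally show ?thesis .
  qed
  have "lp_feasible UU y"
    unfolding lp_feasible_def ucb_simps
  proof (intro conjI ballI)
    fix S assume "S \<in> Pow {1..N} - {}"
    then show "0 \<le> y S" using w0 DDp[of S] by (simp add: y_def)
  next
    fix cc assume cc: "cc \<in> insert None (Some ` {1..K})"
    show "if cc \<in> {None} then (\<Sum>S\<in>Pow {1..N}. lp_mat UU cc S * y S) = lp_rhs UU cc
          else (\<Sum>S\<in>Pow {1..N}. lp_mat UU cc S * y S) \<le> lp_rhs UU cc"
    proof (cases cc)
      case None
      then show ?thesis using norm' by (simp add: ucb_simps)
    next
      case (Some k)
      then have k: "k \<in> {1..K}" using cc by auto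
      have "(\<Sum>S\<in>Pow {1..N}. AS k S * y S) = (\<Sum>v\<in>cvars N. compact_mat vhat a eps (Res k) v * zof N w v)"
        unfolding zof_res[OF vpos] by (rule sw[symmetric])
      also have "\<dots> \<le> (\<Sum>v\<in>cvars N. compact_mat vhat a eps (Res k) v * z v)"
        by (rule res_mono[OF e0' eX' eY k])
      also have "\<dots> \<le> (1 - \<omega>) * c k" using st(6) k by blast
      finally show ?thesis using Some by (simp add: ucb_simps)
    qed
  qed
  moreover have "lp_objective CC z \<le> lp_objective UU y"
  proof -
    have "lp_objective CC z = (\<Sum>v\<in>cvars N. compact_obj vhat r eps v * z v)"
      by (simp add: lp_objective_def compact_simps)
    also have "\<dots> \<le> (\<Sum>v\<in>cvars N. compact_obj vhat r eps v * zof N w v)"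
      by (rule obj_mono[OF e0' eX' eY])
    also have "\<dots> = (\<Sum>S\<in>Pow {1..N}. RS S * y S)"
      unfolding zof_obj[OF vpos] by (rule sw)
    also have "\<dots> = lp_objective UU y" by (simp add: lp_objective_def ucb_simps)
    finally show ?thesis .
  qed
  ultimately show ?thesis by blast
qed

lemma value_eq:
  assumes cpos: "\<forall>k\<in>{1..K}. 0 < c k" and om: "\<omega> < 1"
  shows "lp_value UU = lp_value CC"
proof -
  define SU where "SU = {lp_objective UU y | y. lp_feasible UU y}"
  define SC where "SC = {lp_objective CC z | z. lp_feasible CC z}"
  have sub: "SU \<subseteq> SC"
  proof
    fix t assume "t \<in> SU"
    then obtain y where y: "lp_feasible UU y" "t = lp_objective UU y" by (auto simp: SU_def)
    from U_to_C[OF y(1)] obtain z where z: "lp_feasible CC z" "lp_objective CC z = lp_objective UU y" by blast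
    show "t \<in> SC" unfolding SC_def using z y(2) by (intro CollectI exI[of _ z] conjI) simp_all
  qed
  have dom: "\<exists>t'\<in>SU. t \<le> t'" if "t \<in> SC" for t
  proof -
    obtain z where z: "lp_feasible CC z" "t = lp_objective CC z" using \<open>t \<in> SC\<close> by (auto simp: SC_def)
    from C_to_U[OF z(1)] obtain y where "lp_feasible UU y" "lp_objective CC z \<le> lp_objective UU y" by blast
    then show ?thesis using z(2) by (auto simp: SU_def)
  qed
  define y0 where "y0 S = (if S = {} then (1::real) else 0)" for S :: "nat set"
  have fin: "finite (Pow {1..N})" by simp
  have "lp_feasible UU y0"
    unfolding lp_feasible_def ucb_simps
  proof (intro conjI ballI)
    fix S show "0 \<le> y0 S" by (simp add: y0_def)
  next
    fix cc assume cc: "cc \<in> insert None (Some ` {1..K})"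
    show "if cc \<in> {None} then (\<Sum>S\<in>Pow {1..N}. lp_mat UU cc S * y0 S) = lp_rhs UU cc
          else (\<Sum>S\<in>Pow {1..N}. lp_mat UU cc S * y0 S) \<le> lp_rhs UU cc"
    proof (cases cc)
      case None
      then show ?thesis using sum_delta_r[OF fin, of "\<lambda>_. 1" "{}"] by (simp add: ucb_simps y0_def)
    next
      case (Some k)
      then have k: "k \<in> {1..K}" using cc by auto
      have "(\<Sum>S\<in>Pow {1..N}. AS k S * y0 S) = 0"
        using sum_delta_r[OF fin, of "\<lambda>S. AS k S" "{}"] by (simp add: y0_def)
      moreover have "0 \<le> (1 - \<omega>) * c k"
      proof -
        have "0 < c k" using cpos k by blast
        then show ?thesis using om by simp
      qed
      ultimately show ?thesis using Some by (simp add: ucb_simps)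
    qed
  qed
  then have neU: "SU \<noteq> {}" by (auto simp: SU_def)
  have bddU: "bdd_above SU"
  proof (rule bdd_aboveI)
    fix t assume "t \<in> SU"
    then obtain y where y: "lp_feasible UU y" "t = lp_objective UU y" by (auto simp: SU_def)
    have y0: "\<forall>S\<in>Pow {1..N}. 0 \<le> y S" using y(1) by (simp add: lp_feasible_def ucb_simps)
    have ys: "(\<Sum>S\<in>Pow {1..N}. y S) = 1"
      using y(1) by (simp add: lp_feasible_def ucb_simps)
    have "t = (\<Sum>S\<in>Pow {1..N}. RS S * y S)" using y(2) by (simp add: lp_objective_def ucb_simps)
    also have "\<dots> \<le> (\<Sum>S\<in>Pow {1..N}. \<bar>RS S\<bar>)"
    proof (rule sum_mono)
      fix S assume S: "S \<in> Pow {1..N}"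
      have "y S \<le> (\<Sum>S\<in>Pow {1..N}. y S)" using y0 S fin by (intro member_le_sum) auto
      then have y1: "y S \<le> 1" using ys by simp
      have "RS S * y S \<le> \<bar>RS S\<bar> * y S" using y0 S by (intro mult_right_mono) auto
      also have "\<dots> \<le> \<bar>RS S\<bar> * 1" using y1 by (intro mult_left_mono) auto
      finally show "RS S * y S \<le> \<bar>RS S\<bar>" by simp
    qed
    finally show "t \<le> (\<Sum>S\<in>Pow {1..N}. \<bar>RS S\<bar>)" .
  qed
  have bddC: "bdd_above SC"
  proof -
    obtain B where B: "\<forall>t\<in>SU. t \<le> B" using bddU by (auto simp: bdd_above_def)
    show ?thesis
    proof (rule bdd_aboveI)
      fix t assume "t \<in> SC"
      then obtain t' where "t' \<in> SU" "t \<le> t'" using dom by blast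
      then show "t \<le> B" using B by fastforce
    qed
  qed
  have neC: "SC \<noteq> {}" using neU sub by blast
  have "Sup SU \<le> Sup SC" by (rule cSup_subset_mono[OF neU bddC sub])
  moreover have "Sup SC \<le> Sup SU" by (rule cSup_mono[OF neC bddU dom])
  ultimately have "Sup SU = Sup SC" by simp
  then show ?thesis by (simp add: lp_value_def SU_def SC_def)
qed

lemma CdU:
  assumes du: "lp_dual_feasible CC u"
  shows "lp_dual_feasible UU (\<lambda>x. case x of None \<Rightarrow> u Norm | Some k \<Rightarrow> u (Res k))
       \<and> lp_dual_objective UU (\<lambda>x. case x of None \<Rightarrow> u Norm | Some k \<Rightarrow> u (Res k)) = lp_dual_objective CC u"
proof -
  define u' where "u' = (\<lambda>x. case x of None \<Rightarrow> u Norm | Some k \<Rightarrow> u (Res k))"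
  have unn: "0 \<le> u cc" if "cc \<in> Res ` {1..K} \<union> cin N" "cc \<noteq> Norm" for cc
    using du that by (simp add: lp_dual_feasible_def compact_simps)
  have dfe: "lp_dual_feasible UU u'"
    unfolding lp_dual_feasible_def ucb_simps
  proof (intro conjI ballI)
    fix cc assume "cc \<in> insert None (Some ` {1..K}) - {None}"
    then obtain k where k: "k \<in> {1..K}" "cc = Some k" by auto
    then show "0 \<le> u' cc" using unn[of "Res k"] by (simp add: u'_def)
  next
    fix S assume S: "S \<in> Pow {1..N}"
    define w where "w S' = (if S' = S then 1 / DD vhat S else 0)" for S'
    have Dp: "0 < DD vhat S" by (rule DDp[OF S])
    have w0: "\<forall>S. 0 \<le> w S" using Dp by (simp add: w_def)
    define z where "z = zof N w"
    have dsum: "(\<Sum>S'\<in>Pow {1..N}. w S' * (DD vhat S' * f S')) = f S" for f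
    proof -
      have "(\<Sum>S'\<in>Pow {1..N}. w S' * (DD vhat S' * f S')) = (\<Sum>S'\<in>Pow {1..N}. (if S' = S then 1 / DD vhat S else 0) * (DD vhat S' * f S'))"
        by (simp add: w_def)
      also have "\<dots> = 1 / DD vhat S * (DD vhat S * f S)" using S by (simp add: sum_deltac)
      also have "\<dots> = f S" using Dp by simp
      finally show ?thesis .
    qed
    have wp: "lp_objective CC z \<le> (\<Sum>cc\<in>lp_cons CC. u cc * (\<Sum>v\<in>lp_vars CC. lp_mat CC cc v * z v))"
      using weak_piece[OF du] zof_nonneg[OF w0] by (simp add: z_def)
    have lhs: "lp_objective CC z = RS S"
      unfolding lp_objective_def compact_simps z_def zof_obj[OF vpos] by (rule dsum)
    have resz: "(\<Sum>v\<in>cvars N. compact_mat vhat a eps (Res k) v * z v) = AS k S" for k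
      unfolding z_def zof_res[OF vpos] by (rule dsum)
    have normz: "(\<Sum>v\<in>cvars N. compact_mat vhat a eps Norm v * z v) = 1"
      unfolding z_def zof_norm using dsum[of "\<lambda>_. 1"] by simp
    have cinle: "(\<Sum>cc\<in>cin N. u cc * (\<Sum>v\<in>cvars N. compact_mat vhat a eps cc v * z v)) \<le> u Norm"
    proof -
      have capn: "u (Cap i) * (\<Sum>v\<in>cvars N. compact_mat vhat a eps (Cap i) v * z v) \<le> 0" if i: "i \<in> {1..N}" for i
      proof -
        have "0 \<le> u (Cap i)" using i by (intro unn) (auto simp: cin_def)
        moreover have "(\<Sum>v\<in>cvars N. compact_mat vhat a eps (Cap i) v * z v) \<le> 0"
          using zof_cap[OF w0, of N i] i by (simp add: row_cap z_def)
        ultimately show ?thesis by (rule mult_nonneg_nonpos)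
      qed
      have yin: "u (YI i j) * (\<Sum>v\<in>cvars N. compact_mat vhat a eps (YI i j) v * z v) \<le> 0"
        if i: "i \<in> {1..N}" and j: "j \<in> {1..N}" for i j
      proof -
        have "0 \<le> u (YI i j)" using i j by (intro unn) (auto simp: cin_def)
        moreover have "(\<Sum>v\<in>cvars N. compact_mat vhat a eps (YI i j) v * z v) \<le> 0"
          using zof_yi[OF w0, of N i j] i j by (simp add: row_yi z_def)
        ultimately show ?thesis by (rule mult_nonneg_nonpos)
      qed
      have yjn: "u (YJ i j) * (\<Sum>v\<in>cvars N. compact_mat vhat a eps (YJ i j) v * z v) \<le> 0"
        if i: "i \<in> {1..N}" and j: "j \<in> {1..N}" for i j
      proof -
        have "0 \<le> u (YJ i j)" using i j by (intro unn) (auto simp: cin_def)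
        moreover have "(\<Sum>v\<in>cvars N. compact_mat vhat a eps (YJ i j) v * z v) \<le> 0"
          using zof_yj[OF w0, of N i j] i j by (simp add: row_yj z_def)
        ultimately show ?thesis by (rule mult_nonneg_nonpos)
      qed
      have s1: "(\<Sum>i\<in>{1..N}. u (Cap i) * (\<Sum>v\<in>cvars N. compact_mat vhat a eps (Cap i) v * z v)) \<le> 0"
        using capn by (intro sum_nonpos) auto
      have s2: "(\<Sum>i\<in>{1..N}. \<Sum>j\<in>{1..N}. u (YI i j) * (\<Sum>v\<in>cvars N. compact_mat vhat a eps (YI i j) v * z v)) \<le> 0"
        using yin by (intro sum_nonpos) auto
      have s3: "(\<Sum>i\<in>{1..N}. \<Sum>j\<in>{1..N}. u (YJ i j) * (\<Sum>v\<in>cvars N. compact_mat vhat a eps (YJ i j) v * z v)) \<le> 0"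
        using yjn by (intro sum_nonpos) auto
      show ?thesis unfolding sum_cin using s1 s2 s3 normz by simp
    qed
    have "RS S \<le> (\<Sum>k\<in>{1..K}. u (Res k) * AS k S) + u Norm"
      using wp cinle unfolding lhs compact_simps sum_ccons by (simp add: resz)
    then show "if S \<in> {} then (\<Sum>cc\<in>insert None (Some ` {1..K}). lp_mat UU cc S * u' cc) = RS S
          else RS S \<le> (\<Sum>cc\<in>insert None (Some ` {1..K}). lp_mat UU cc S * u' cc)"
      by (simp only: sum_ucons) (simp add: ucb_simps u'_def ac_simps)
  qed
  have "lp_dual_objective UU u' = lp_dual_objective CC u"
    unfolding lp_dual_objective_def ucb_simps compact_simps sum_ccons sum_ucons sum_cin
    by (simp add: ucb_simps u'_def)
  with dfe show ?thesis by (simp add: u'_def)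
qed

lemma UdC:
  assumes du: "lp_dual_feasible UU u'"
  shows "\<exists>u. lp_dual_feasible CC u \<and> (\<forall>k\<in>{1..K}. u (Res k) = u' (Some k))
           \<and> lp_dual_objective CC u \<le> lp_dual_objective UU u'"
proof -
  define \<theta> where "\<theta> = u' None"
  define \<mu> where "\<mu> k = u' (Some k)" for k
  have \<mu>0: "0 \<le> \<mu> k" if "k \<in> {1..K}" for k
    using du that by (simp add: lp_dual_feasible_def ucb_simps \<mu>_def)
  have udf: "RS S \<le> \<theta> + (\<Sum>k\<in>{1..K}. AS k S * \<mu> k)" if "S \<in> Pow {1..N}" for S
  proof -
    have "lp_obj UU S \<le> (\<Sum>cc\<in>lp_cons UU. lp_mat UU cc S * u' cc)"
      using du that by (simp add: lp_dual_feasible_def ucb_simps)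
    then show ?thesis unfolding ucb_simps sum_ucons by (simp add: \<theta>_def \<mu>_def)
  qed
  define Pin :: "(cvar, ccon) lp" where "Pin = \<lparr> lp_vars = cvars N, lp_cons = cin N, lp_eqs = {Norm}, lp_free = {X0},
     lp_obj = (\<lambda>v. compact_obj vhat r eps v - (\<Sum>k\<in>{1..K}. \<mu> k * compact_mat vhat a eps (Res k) v)),
     lp_mat = compact_mat vhat a eps, lp_rhs = compact_rhs K c \<omega> \<rparr>"
  have Pin_simps: "lp_vars Pin = cvars N" "lp_cons Pin = cin N" "lp_eqs Pin = {Norm}" "lp_free Pin = {X0}"
    "lp_obj Pin = (\<lambda>v. compact_obj vhat r eps v - (\<Sum>k\<in>{1..K}. \<mu> k * compact_mat vhat a eps (Res k) v))"
    "lp_mat Pin = compact_mat vhat a eps" "lp_rhs Pin = compact_rhs K c \<omega>"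
    by (simp_all add: Pin_def)
  define z0 where "z0 v = (if v = X0 then 1 else (0::real))" for v
  have fz0: "lp_feasible Pin z0"
    unfolding lp_feasible_def Pin_simps
  proof (intro conjI ballI)
    fix v assume "v \<in> cvars N - {X0}" then show "0 \<le> z0 v" by (simp add: z0_def)
  next
    fix cc assume cc: "cc \<in> cin N"
    show "if cc \<in> {Norm} then (\<Sum>v\<in>cvars N. compact_mat vhat a eps cc v * z0 v) = compact_rhs K c \<omega> cc
          else (\<Sum>v\<in>cvars N. compact_mat vhat a eps cc v * z0 v) \<le> compact_rhs K c \<omega> cc"
      using cc
    proof (cases rule: cin_cases)
      case 1 then show ?thesis by (simp add: row_norm z0_def)
    next
      case (2 i) then show ?thesis by (simp add: row_cap z0_def)
    next
      case (3 i j) then show ?thesis by (simp add: row_yi z0_def)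
    next
      case (4 i j) then show ?thesis by (simp add: row_yj z0_def)
    qed
  qed
  have bnd: "\<forall>z. lp_feasible Pin z \<longrightarrow> lp_objective Pin z \<le> \<theta>"
  proof (intro allI impI)
    fix z assume fz: "lp_feasible Pin z"
    have nn: "\<forall>v\<in>cvars N - {X0}. 0 \<le> z v"
     and rows: "\<forall>cc\<in>cin N. if cc \<in> {Norm} then (\<Sum>v\<in>cvars N. compact_mat vhat a eps cc v * z v) = compact_rhs K c \<omega> cc
          else (\<Sum>v\<in>cvars N. compact_mat vhat a eps cc v * z v) \<le> compact_rhs K c \<omega> cc"
      using fz unfolding lp_feasible_def Pin_simps by blast+
    note st = cin_struct[OF nn rows]
    from struct_decomp[OF st(1) st(2) st(3) st(4) st(5)] obtain w where w0: "\<forall>S. 0 \<le> w S"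
      and e0: "zof N w X0 = z X0" and eX: "\<forall>i\<in>{1..N}. zof N w (X i) = z (X i)"
      and eY: "\<forall>i\<in>{1..N}. \<forall>j\<in>{1..N}. z (Y i j) \<le> zof N w (Y i j)" by blast
    have e0': "z X0 = zof N w X0" and eX': "\<forall>i\<in>{1..N}. z (X i) = zof N w (X i)" using e0 eX by auto
    define z' where "z' = zof N w"
    define OB where "OB zz = (\<Sum>v\<in>cvars N. compact_obj vhat r eps v * zz v)" for zz :: "cvar \<Rightarrow> real"
    define RE where "RE k zz = (\<Sum>v\<in>cvars N. compact_mat vhat a eps (Res k) v * zz v)" for k and zz :: "cvar \<Rightarrow> real"
    have objP: "lp_objective Pin zz = OB zz - (\<Sum>k\<in>{1..K}. \<mu> k * RE k zz)" for zz
    proof -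
      have "lp_objective Pin zz = (\<Sum>v\<in>cvars N. compact_obj vhat r eps v * zz v
          - (\<Sum>k\<in>{1..K}. \<mu> k * (compact_mat vhat a eps (Res k) v * zz v)))"
        unfolding lp_objective_def Pin_simps
        by (intro sum.cong refl) (simp add: left_diff_distrib right_diff_distrib sum_distrib_right sum_distrib_left ac_simps)
      also have "\<dots> = OB zz - (\<Sum>v\<in>cvars N. \<Sum>k\<in>{1..K}. \<mu> k * (compact_mat vhat a eps (Res k) v * zz v))"
        by (simp add: OB_def sum_subtractf)
      also have "(\<Sum>v\<in>cvars N. \<Sum>k\<in>{1..K}. \<mu> k * (compact_mat vhat a eps (Res k) v * zz v))
          = (\<Sum>k\<in>{1..K}. \<Sum>v\<in>cvars N. \<mu> k * (compact_mat vhat a eps (Res k) v * zz v))"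
        by (rule sum.swap)
      also have "\<dots> = (\<Sum>k\<in>{1..K}. \<mu> k * RE k zz)"
        by (simp add: RE_def sum_distrib_left)
      finally show ?thesis .
    qed
    have o1: "OB z \<le> OB z'" unfolding OB_def z'_def by (rule obj_mono[OF e0' eX' eY])
    have o2: "(\<Sum>k\<in>{1..K}. \<mu> k * RE k z') \<le> (\<Sum>k\<in>{1..K}. \<mu> k * RE k z)"
    proof (rule sum_mono)
      fix k assume k: "k \<in> {1..K}"
      have "RE k z' \<le> RE k z" unfolding RE_def z'_def by (rule res_mono[OF e0' eX' eY k])
      then show "\<mu> k * RE k z' \<le> \<mu> k * RE k z" using \<mu>0[OF k] by (rule mult_left_mono)
    qed
    have OBz': "OB z' = (\<Sum>S\<in>Pow {1..N}. w S * (DD vhat S * RS S))"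
      unfolding OB_def z'_def by (rule zof_obj[OF vpos])
    have REz': "RE k z' = (\<Sum>S\<in>Pow {1..N}. w S * (DD vhat S * AS k S))" for k
      unfolding RE_def z'_def by (rule zof_res[OF vpos])
    have normw: "(\<Sum>S\<in>Pow {1..N}. w S * DD vhat S) = 1"
    proof -
      have "(\<Sum>S\<in>Pow {1..N}. w S * DD vhat S) = (\<Sum>v\<in>cvars N. compact_mat vhat a eps Norm v * zof N w v)"
        by (simp add: zof_norm)
      also have "\<dots> = zof N w X0 + (\<Sum>i\<in>{1..N}. vhat i * zof N w (X i))" by (rule row_norm)
      also have "\<dots> = z X0 + (\<Sum>i\<in>{1..N}. vhat i * z (X i))" using e0 eX by simp
      also have "\<dots> = 1" by (rule st(2))
      finally show ?thesis .
    qed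
    have "(\<Sum>k\<in>{1..K}. \<mu> k * RE k z') = (\<Sum>S\<in>Pow {1..N}. w S * DD vhat S * (\<Sum>k\<in>{1..K}. AS k S * \<mu> k))"
    proof -
      have "(\<Sum>k\<in>{1..K}. \<mu> k * RE k z') = (\<Sum>k\<in>{1..K}. \<Sum>S\<in>Pow {1..N}. w S * DD vhat S * (AS k S * \<mu> k))"
        unfolding REz' by (intro sum.cong refl) (simp add: sum_distrib_left ac_simps)
      also have "\<dots> = (\<Sum>S\<in>Pow {1..N}. \<Sum>k\<in>{1..K}. w S * DD vhat S * (AS k S * \<mu> k))" by (rule sum.swap)
      also have "\<dots> = (\<Sum>S\<in>Pow {1..N}. w S * DD vhat S * (\<Sum>k\<in>{1..K}. AS k S * \<mu> k))"
        by (simp add: sum_distrib_left)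
      finally show ?thesis .
    qed
    then have "OB z' - (\<Sum>k\<in>{1..K}. \<mu> k * RE k z') = (\<Sum>S\<in>Pow {1..N}. w S * DD vhat S * (RS S - (\<Sum>k\<in>{1..K}. AS k S * \<mu> k)))"
      unfolding OBz' by (simp add: sum_subtractf right_diff_distrib ac_simps)
    also have "\<dots> \<le> (\<Sum>S\<in>Pow {1..N}. w S * DD vhat S * \<theta>)"
    proof (rule sum_mono)
      fix S assume S: "S \<in> Pow {1..N}"
      have "RS S - (\<Sum>k\<in>{1..K}. AS k S * \<mu> k) \<le> \<theta>" using udf[OF S] by simp
      moreover have "0 \<le> w S * DD vhat S" using w0 DDp[OF S] by simp
      ultimately show "w S * DD vhat S * (RS S - (\<Sum>k\<in>{1..K}. AS k S * \<mu> k)) \<le> w S * DD vhat S * \<theta>"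
        by (rule mult_left_mono)
    qed
    also have "\<dots> = \<theta>" using normw by (simp add: sum_distrib_right[symmetric])
    finally have "OB z' - (\<Sum>k\<in>{1..K}. \<mu> k * RE k z') \<le> \<theta>" .
    then show "lp_objective Pin z \<le> \<theta>" using o1 o2 objP[of z] by linarith
  qed
  from lp_strong[of Pin z0 \<theta>] fz0 bnd obtain v where
    dv: "lp_dual_feasible Pin v" and ov: "lp_dual_objective Pin v \<le> \<theta>"
    by (auto simp: Pin_simps fin_cvars fin_cin)
  define u where "u cc = (case cc of Res k \<Rightarrow> \<mu> k | _ \<Rightarrow> v cc)" for cc
  have uv: "u cc = v cc" if "cc \<in> cin N" for cc
    using that Res_notin_cin by (cases cc) (auto simp: u_def)
  have sum_cin_uv: "(\<Sum>cc\<in>cin N. f cc * u cc) = (\<Sum>cc\<in>cin N. f cc * v cc)" for f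
    by (intro sum.cong refl) (simp add: uv)
  have vnn: "0 \<le> v cc" if "cc \<in> cin N" "cc \<noteq> Norm" for cc
    using dv that by (simp add: lp_dual_feasible_def Pin_simps)
  have vcol: "if var \<in> {X0} then (\<Sum>cc\<in>cin N. compact_mat vhat a eps cc var * v cc) = lp_obj Pin var
       else lp_obj Pin var \<le> (\<Sum>cc\<in>cin N. compact_mat vhat a eps cc var * v cc)" if "var \<in> cvars N" for var
    using dv that unfolding lp_dual_feasible_def Pin_simps(1,2,4,6) by blast
  have "lp_dual_feasible CC u"
    unfolding lp_dual_feasible_def compact_simps
  proof (intro conjI ballI)
    fix cc assume cc: "cc \<in> Res ` {1..K} \<union> cin N - {Norm}"
    show "0 \<le> u cc"
    proof (cases "cc \<in> cin N")
      case True then show ?thesis using vnn cc uv by simp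
    next
      case False
      then obtain k where "k \<in> {1..K}" "cc = Res k" using cc by blast
      then show ?thesis using \<mu>0 by (simp add: u_def)
    qed
  next
    fix var assume var: "var \<in> cvars N"
    have col: "(\<Sum>cc\<in>Res ` {1..K} \<union> cin N. compact_mat vhat a eps cc var * u cc)
        = (\<Sum>k\<in>{1..K}. \<mu> k * compact_mat vhat a eps (Res k) var) + (\<Sum>cc\<in>cin N. compact_mat vhat a eps cc var * v cc)"
      unfolding sum_ccons sum_cin_uv by (simp add: u_def ac_simps)
    have ob: "compact_obj vhat r eps var = lp_obj Pin var + (\<Sum>k\<in>{1..K}. \<mu> k * compact_mat vhat a eps (Res k) var)"
      by (simp add: Pin_simps)
    show "if var \<in> {X0} then (\<Sum>cc\<in>Res ` {1..K} \<union> cin N. compact_mat vhat a eps cc var * u cc) = compact_obj vhat r eps var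
       else compact_obj vhat r eps var \<le> (\<Sum>cc\<in>Res ` {1..K} \<union> cin N. compact_mat vhat a eps cc var * u cc)"
      using vcol[OF var] unfolding col ob by (cases "var \<in> {X0}") simp_all
  qed
  moreover have "\<forall>k\<in>{1..K}. u (Res k) = u' (Some k)" by (simp add: u_def \<mu>_def)
  moreover have "lp_dual_objective CC u \<le> lp_dual_objective UU u'"
  proof -
    have "lp_dual_objective CC u = (\<Sum>k\<in>{1..K}. (1 - \<omega>) * c k * \<mu> k) + lp_dual_objective Pin v"
      unfolding lp_dual_objective_def compact_simps Pin_simps sum_ccons sum_cin_uv by (simp add: u_def)
    also have "\<dots> \<le> (\<Sum>k\<in>{1..K}. (1 - \<omega>) * c k * \<mu> k) + \<theta>" using ov by simp
    also have "\<dots> = lp_dual_objective UU u'"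
      unfolding lp_dual_objective_def ucb_simps sum_ucons by (simp add: \<theta>_def \<mu>_def)
    finally show ?thesis .
  qed
  ultimately show ?thesis by blast
qed

end

theorem theorem3:
  fixes N K :: nat
    and vhat r :: "nat \<Rightarrow> real"
    and a :: "nat \<Rightarrow> nat \<Rightarrow> real"
    and c :: "nat \<Rightarrow> real"
    and \<omega> \<Psi> :: real
    and n :: "nat \<Rightarrow> nat"
    and eps :: "nat \<Rightarrow> real"
  assumes vhat_pos: "\<forall>i\<in>{1..N}. 0 < vhat i"
    and r_bounds: "\<forall>i\<in>{1..N}. 0 \<le> r i \<and> r i \<le> 1"
    and a_bounds: "\<forall>i\<in>{1..N}. \<forall>k\<in>{1..K}. 0 \<le> a i k \<and> a i k \<le> 1"
    and c_pos: "\<forall>k\<in>{1..K}. 0 < c k"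
    and \<omega>_bounds: "0 \<le> \<omega>" "\<omega> < 1"
    and n_pos: "\<forall>i\<in>{1..N}. 0 < n i"
    and \<Psi>_pos: "0 < \<Psi>"
    and eps_def: "\<forall>i. eps i = (sqrt (real N) + 1) * \<Psi> / sqrt (real (n i))"
  shows "lp_value (ucb_lp N K vhat r a c \<omega> eps) = lp_value (compact_lp N K vhat r a c \<omega> eps)
    \<and> {(\<lambda>k\<in>{1..K}. u (Some k)) | u. lp_dual_optimal (ucb_lp N K vhat r a c \<omega> eps) u}
      = {(\<lambda>k\<in>{1..K}. u (Res k)) | u. lp_dual_optimal (compact_lp N K vhat r a c \<omega> eps) u}"
proof -
  have rnn: "\<forall>i\<in>{1..N}. 0 \<le> r i" using r_bounds by blast
  have ann: "\<forall>i\<in>{1..N}. \<forall>k\<in>{1..K}. 0 \<le> a i k" using a_bounds by blast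
  have epsnn: "\<forall>i. 0 \<le> eps i"
  proof
    fix i
    have "0 \<le> (sqrt (real N) + 1) * \<Psi>" using \<Psi>_pos by simp
    then show "0 \<le> eps i" using eps_def by simp
  qed
  note ctx = vhat_pos rnn ann epsnn
  let ?U = "ucb_lp N K vhat r a c \<omega> eps" and ?C = "compact_lp N K vhat r a c \<omega> eps"
  have val: "lp_value ?U = lp_value ?C" by (rule value_eq[OF ctx c_pos \<omega>_bounds(2)])
  have CdU': "lp_dual_feasible ?U (\<lambda>x. case x of None \<Rightarrow> u Norm | Some k \<Rightarrow> u (Res k))
       \<and> lp_dual_objective ?U (\<lambda>x. case x of None \<Rightarrow> u Norm | Some k \<Rightarrow> u (Res k)) = lp_dual_objective ?C u"
    if "lp_dual_feasible ?C u" for u using CdU[OF ctx that] .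
  have UdC': "\<exists>u. lp_dual_feasible ?C u \<and> (\<forall>k\<in>{1..K}. u (Res k) = u' (Some k))
           \<and> lp_dual_objective ?C u \<le> lp_dual_objective ?U u'"
    if "lp_dual_feasible ?U u'" for u' using UdC[OF ctx that] .
  have "{(\<lambda>k\<in>{1..K}. u (Some k)) | u. lp_dual_optimal ?U u}
      = {(\<lambda>k\<in>{1..K}. u (Res k)) | u. lp_dual_optimal ?C u}"
  proof (intro equalityI subsetI)
    fix f assume "f \<in> {(\<lambda>k\<in>{1..K}. u (Some k)) | u. lp_dual_optimal ?U u}"
    then obtain u' where f: "f = (\<lambda>k\<in>{1..K}. u' (Some k))" and opt: "lp_dual_optimal ?U u'" by blast
    from opt have fe: "lp_dual_feasible ?U u'" and mn: "\<forall>u2. lp_dual_feasible ?U u2 \<longrightarrow> lp_dual_objective ?U u' \<le> lp_dual_objective ?U u2"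
      by (auto simp: lp_dual_optimal_def)
    from UdC'[OF fe] obtain u where u: "lp_dual_feasible ?C u" "\<forall>k\<in>{1..K}. u (Res k) = u' (Some k)"
      "lp_dual_objective ?C u \<le> lp_dual_objective ?U u'" by blast
    have "lp_dual_optimal ?C u"
      unfolding lp_dual_optimal_def
    proof (intro conjI allI impI)
      show "lp_dual_feasible ?C u" by (rule u(1))
      fix u2 assume u2: "lp_dual_feasible ?C u2"
      from CdU'[OF u2] mn show "lp_dual_objective ?C u \<le> lp_dual_objective ?C u2"
        using u(3) by fastforce
    qed
    moreover have "f = (\<lambda>k\<in>{1..K}. u (Res k))" using f u(2) by (auto simp: restrict_def)
    ultimately show "f \<in> {(\<lambda>k\<in>{1..K}. u (Res k)) | u. lp_dual_optimal ?C u}" by blast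
  next
    fix f assume "f \<in> {(\<lambda>k\<in>{1..K}. u (Res k)) | u. lp_dual_optimal ?C u}"
    then obtain u where f: "f = (\<lambda>k\<in>{1..K}. u (Res k))" and opt: "lp_dual_optimal ?C u" by blast
    from opt have fe: "lp_dual_feasible ?C u" and mn: "\<forall>u2. lp_dual_feasible ?C u2 \<longrightarrow> lp_dual_objective ?C u \<le> lp_dual_objective ?C u2"
      by (auto simp: lp_dual_optimal_def)
    define u' where "u' = (\<lambda>x. case x of None \<Rightarrow> u Norm | Some k \<Rightarrow> u (Res k))"
    have u': "lp_dual_feasible ?U u'" "lp_dual_objective ?U u' = lp_dual_objective ?C u"
      using CdU'[OF fe] by (simp_all add: u'_def)
    have "lp_dual_optimal ?U u'"
      unfolding lp_dual_optimal_def
    proof (intro conjI allI impI)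
      show "lp_dual_feasible ?U u'" by (rule u'(1))
      fix u2 assume u2: "lp_dual_feasible ?U u2"
      from UdC'[OF u2] obtain uc where "lp_dual_feasible ?C uc" "lp_dual_objective ?C uc \<le> lp_dual_objective ?U u2"
        by blast
      then show "lp_dual_objective ?U u' \<le> lp_dual_objective ?U u2" using mn u'(2) by fastforce
    qed
    moreover have "f = (\<lambda>k\<in>{1..K}. u' (Some k))" using f by (simp add: u'_def)
    ultimately show "f \<in> {(\<lambda>k\<in>{1..K}. u (Some k)) | u. lp_dual_optimal ?U u}" by blast
  qed
  with val show ?thesis by blast
qed

end
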